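(* Let $S=p_1,\ldots,p_n$ have independent entries uniform on $[0,1]$, let the deletion probability satisfy $\delta<10^{-7}$, and let $m>n$. Run Algorithm 1 (described in the context) on independent trace sets $X$ and $Y$ of $S$ with $|X|=m^2$, $|Y|=m^{25}$. Then with probability at least $1-O(m^{-0.2})$, every chunk $M_x$ returned by Algorithm 1 is deletion-free.
   Context: A trace is generated from $S$ by sampling independent bits $t_k$ with $\Pr[t_k=1]=p_k$, deleting each independently with probability $\delta$, and concatenating survivors; each surviving bit originates from a specific original position. Let $w=10000\log m$ (natural logarithm). Two length-$w$ binary segments "match" if their Hamming ($\ell_1$) distance is at most $5w/12$. Algorithm 1: for each trace $x\in X$, draw $i$ uniformly from $\{1,\ldots,n-3w+1\}$ and set $L_x=x_{i..i+w-1}$, $M_x=x_{i+w..i+2w-1}$, $R_x=x_{i+2w..i+3w-1}$. Return $M_x$ iff (1) there exist $y\in Y$ and an index $j$ such that $L_x$ matches $y_{j..j+w-1}$ and $R_x$ matches $y_{j+2w..j+3w-1}$, and (2) there do not exist $y\in Y$ and indices $j,j'$ with $j'-j>2w$ such that $L_x$ matches $y_{j..j+w-1}$ and $R_x$ matches $y_{j'..j'+w-1}$ (windows extending beyond the end of a trace are not considered). A chunk $M_x$ is deletion-free if its $w$ bits originate from $w$ consecutive original positions of $S$. *)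

theory Defs
  imports "HOL-Probability.Probability"
begin

text \<open>A trace is a list of surviving bits, each tagged with the (0-based) original
  position of S it originates from.\<close>
type_synonym trace = "(bool \<times> nat) list"

fun list_pmf :: "'a pmf list \<Rightarrow> 'a list pmf" where
  "list_pmf [] = return_pmf []"
| "list_pmf (q # qs) = bind_pmf q (\<lambda>x. bind_pmf (list_pmf qs) (\<lambda>xs. return_pmf (x # xs)))"

definition pos_pmf :: "real \<Rightarrow> (nat \<Rightarrow> real) \<Rightarrow> nat \<Rightarrow> trace pmf" where
  "pos_pmf \<delta> p k =
     bind_pmf (bernoulli_pmf (p k)) (\<lambda>t.
     bind_pmf (bernoulli_pmf \<delta>) (\<lambda>d.
     return_pmf (if d then [] else [(t, k)])))"

definition trace_pmf :: "real \<Rightarrow> nat \<Rightarrow> (nat \<Rightarrow> real) \<Rightarrow> trace pmf" where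
  "trace_pmf \<delta> n p = map_pmf concat (list_pmf (map (pos_pmf \<delta> p) [0..<n]))"

definition win_len :: "nat \<Rightarrow> nat" where
  "win_len m = nat \<lceil>10000 * ln (real m)\<rceil>"

text \<open>Window of length w starting at 0-based index i (1-based index i+1).\<close>
definition window :: "nat \<Rightarrow> trace \<Rightarrow> nat \<Rightarrow> trace" where
  "window w x i = take w (drop i x)"

definition matches :: "nat \<Rightarrow> trace \<Rightarrow> trace \<Rightarrow> bool" where
  "matches w a b \<longleftrightarrow> real (card {k. k < w \<and> fst (a ! k) \<noteq> fst (b ! k)}) \<le> 5 * real w / 12"

text \<open>Algorithm 1 returns M_x for trace x with chosen (0-based) start i against trace set Y.\<close>
definition returns :: "nat \<Rightarrow> trace list \<Rightarrow> trace \<Rightarrow> nat \<Rightarrow> bool" where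
  "returns w Y x i \<longleftrightarrow>
     i + 3 * w \<le> length x \<and>
     (\<exists>y\<in>set Y. \<exists>j. j + 3 * w \<le> length y \<and>
        matches w (window w x i) (window w y j) \<and>
        matches w (window w x (i + 2 * w)) (window w y (j + 2 * w))) \<and>
     \<not> (\<exists>y\<in>set Y. \<exists>j j'. j + 2 * w < j' \<and> j' + w \<le> length y \<and>
        matches w (window w x i) (window w y j) \<and>
        matches w (window w x (i + 2 * w)) (window w y j'))"

definition deletion_free :: "nat \<Rightarrow> trace \<Rightarrow> bool" where
  "deletion_free w M \<longleftrightarrow> (\<forall>k<w. snd (M ! k) = snd (M ! 0) + k)"

definition all_chunks_deletion_free :: "nat \<Rightarrow> (trace \<times> nat) list \<Rightarrow> trace list \<Rightarrow> bool" where
  "all_chunks_deletion_free w XI Y \<longleftrightarrow>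
     (\<forall>(x, i) \<in> set XI. returns w Y x i \<longrightarrow> deletion_free w (window w x (i + w)))"

definition algo_experiment :: "real \<Rightarrow> nat \<Rightarrow> nat \<Rightarrow> (nat \<Rightarrow> real) \<Rightarrow> ((trace \<times> nat) list \<times> trace list) pmf" where
  "algo_experiment \<delta> n m p =
     bind_pmf (list_pmf (replicate (m ^ 2)
                 (pair_pmf (trace_pmf \<delta> n p) (pmf_of_set {0..n - 3 * win_len m})))) (\<lambda>XI.
     bind_pmf (list_pmf (replicate (m ^ 25) (trace_pmf \<delta> n p))) (\<lambda>Y.
     return_pmf (XI, Y)))"

definition S_measure :: "nat \<Rightarrow> (nat \<Rightarrow> real) measure" where
  "S_measure n = PiM {..<n} (\<lambda>_. uniform_measure lborel {0..1::real})"

end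

theory Submission
  imports Defs
begin


lemma upt_split: "lo \<le> v \<Longrightarrow> v \<le> hi \<Longrightarrow> [lo..<hi] = [lo..<v] @ [v..<hi]"
  using upt_add_eq_append[of lo v "hi - v"] by simp

lemma filter_upt_split: "lo \<le> v \<Longrightarrow> v \<le> hi \<Longrightarrow> filter Q [lo..<hi] = filter Q [lo..<v] @ filter Q [v..<hi]"
  by (simp add: upt_split[of lo v hi])

lemma filter_take_drop:
  assumes L: "L = filter Q [lo..<hi]" and k: "k < length L"
  shows "take k L = filter Q [lo..<L!k] \<and> drop k L = filter Q [L!k..<hi]"
proof -
  define v where "v = L!k"
  have vin: "v \<in> set L" using k by (simp add: v_def)
  then have v: "lo \<le> v" "v < hi" "Q v" using L by auto
  define A where "A = filter Q [lo..<v]"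
  define B where "B = filter Q [v..<hi]"
  have LAB: "L = A @ B" using L v filter_upt_split[of lo v hi Q] by (simp add: A_def B_def)
  have B: "B = v # filter Q [Suc v..<hi]" using v by (simp add: B_def upt_conv_Cons)
  have "L ! length A = v" using LAB B by (simp add: nth_append)
  moreover have "distinct L" using L by simp
  moreover have "length A < length L" using LAB B by simp
  ultimately have "k = length A" using k nth_eq_iff_index_eq[of L k "length A"] v_def by metis
  then have "take k L = A \<and> drop k L = B" using LAB by simp
  then show ?thesis unfolding A_def B_def v_def .
qed

lemma filter_take_Suc:
  assumes L: "L = filter Q [lo..<hi]" and k: "k < length L"
  shows "take (Suc k) L = filter Q [lo..<Suc (L!k)]"
proof -
  have "L!k \<in> set L" using k by simp
  then have v: "lo \<le> L!k" "L!k < hi" "Q (L!k)" using L by auto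
  have "take (Suc k) L = take k L @ [L!k]" using k by (simp add: take_Suc_conv_app_nth)
  also have "\<dots> = filter Q [lo..<L!k] @ [L!k]" using filter_take_drop[OF L k] by simp
  also have "\<dots> = filter Q [lo..<Suc (L!k)]" using v by simp
  finally show ?thesis .
qed

lemma sorted_nth_add:
  assumes "sorted_wrt (<) (L::nat list)" "i + k < length L"
  shows "L!i + k \<le> L!(i+k)"
  using assms
proof (induction k)
  case 0 then show ?case by simp
next
  case (Suc k)
  then have "L!i + k \<le> L!(i+k)" by simp
  moreover have "L!(i+k) < L!(i + Suc k)" using Suc.prems sorted_wrt_nth_less[of "(<)" L "i+k" "i + Suc k"] by simp
  ultimately show ?case by simp
qed

lemma window_map: "window w (map f L) i = map f (take w (drop i L))"
  by (simp add: window_def take_map drop_map)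

lemma card_nth_set:
  assumes "distinct L" "length L = w"
  shows "card {q. q < w \<and> R (L!q)} = card {k \<in> set L. R k}"
proof -
  have "(\<lambda>q. L!q) ` {q. q < w \<and> R (L!q)} = {k \<in> set L. R k}"
  proof
    show "(\<lambda>q. L!q) ` {q. q < w \<and> R (L!q)} \<subseteq> {k \<in> set L. R k}"
      using assms by auto
    show "{k \<in> set L. R k} \<subseteq> (\<lambda>q. L!q) ` {q. q < w \<and> R (L!q)}"
    proof
      fix k assume "k \<in> {k \<in> set L. R k}"
      then obtain q where "q < w" "L!q = k" "R k" using assms by (auto simp: in_set_conv_nth)
      then show "k \<in> (\<lambda>q. L!q) ` {q. q < w \<and> R (L!q)}" by force
    qed
  qed
  moreover have "inj_on (\<lambda>q. L!q) {q. q < w \<and> R (L!q)}"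
    using assms unfolding inj_on_def by (simp add: nth_eq_iff_index_eq)
  ultimately show ?thesis using card_image by metis
qed

lemma matches_map:
  assumes "distinct L" "length L = w"
  shows "matches w (map (\<lambda>k. (T k, k)) L) (map (\<lambda>k. (T' k, k)) L)
     \<longleftrightarrow> real (card {k \<in> set L. T k \<noteq> T' k}) \<le> 5 * real w / 12"
proof -
  have "{k. k < w \<and> fst (map (\<lambda>k. (T k, k)) L ! k) \<noteq> fst (map (\<lambda>k. (T' k, k)) L ! k)}
      = {q. q < w \<and> T (L!q) \<noteq> T' (L!q)}" using assms by auto
  then show ?thesis unfolding matches_def using card_nth_set[OF assms, of "\<lambda>k. T k \<noteq> T' k"] by simp
qed


definition mk :: "(bool \<times> bool) list \<Rightarrow> trace" where
  "mk cs = map (\<lambda>k. (fst (cs!k), k)) (filter (\<lambda>k. \<not> snd (cs!k)) [0..<length cs])"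

lemma core:
  assumes lens: "length cs = n" "length cs' = n"
  and P: "P = filter (\<lambda>k. \<not> snd (cs!k)) [0..<n]"
  and i: "i + 3*w \<le> length P" and w: "0 < w"
  and pat: "\<forall>k. P!i \<le> k \<and> k \<le> P!(i+3*w-1) \<longrightarrow>
              (snd (cs'!k) \<longleftrightarrow> snd (cs!k) \<and> \<not> (P!(i+w) \<le> k \<and> k \<le> P!(i+2*w-1)))"
  and nd: "\<not> deletion_free w (window w (mk cs) (i+w))"
  and hL: "real (card {k \<in> set (filter (\<lambda>k. \<not> snd (cs!k)) [P!i..<P!(i+w)]). fst (cs!k) \<noteq> fst (cs'!k)}) \<le> 5 * real w / 12"
  and hR: "real (card {k \<in> set (filter (\<lambda>k. \<not> snd (cs!k)) [P!(i+2*w)..<Suc (P!(i+3*w-1))]). fst (cs!k) \<noteq> fst (cs'!k)}) \<le> 5 * real w / 12"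
  shows "\<exists>j j'. j + 2*w < j' \<and> j' + w \<le> length (mk cs') \<and>
           matches w (window w (mk cs) i) (window w (mk cs') j) \<and>
           matches w (window w (mk cs) (i+2*w)) (window w (mk cs') j')"
proof -
  define Q where "Q = (\<lambda>k. \<not> snd (cs!k))"
  define Q' where "Q' = (\<lambda>k. \<not> snd (cs'!k))"
  define P' where "P' = filter Q' [0..<n]"
  define a where "a = P!i"
  define bM where "bM = P!(i+w)"
  define eM where "eM = P!(i+2*w-1)"
  define bR where "bR = P!(i+2*w)"
  define eR where "eR = P!(i+3*w-1)"
  have P2: "P = filter Q [0..<n]" using P Q_def by simp
  have mkx: "mk cs = map (\<lambda>k. (fst (cs!k), k)) P" using P lens by (simp add: mk_def)
  have mky: "mk cs' = map (\<lambda>k. (fst (cs'!k), k)) P'" using lens by (simp add: mk_def P'_def Q'_def)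
  have sP: "sorted_wrt (<) P" using P2 by (simp add: sorted_wrt_filter)
  have Pn: "\<forall>x\<in>set P. x < n" using P2 by simp
  define D where "D = drop i P"
  have D: "D = filter Q [a..<n]" using filter_take_drop[OF P2, of i] i w by (simp add: D_def a_def)
  have lD: "length D \<ge> 3*w" using i by (simp add: D_def)
  have Dn: "\<And>k. k < length D \<Longrightarrow> D!k = P!(i+k)" using i by (simp add: D_def)
  define Lx where "Lx = take w D"
  have Lx: "Lx = filter Q [a..<bM]"
    using filter_take_drop[OF D, of w] lD w Dn[of w] by (simp add: Lx_def bM_def)
  have lLx: "length Lx = w" using lD by (simp add: Lx_def)
  have D2: "drop (2*w) D = filter Q [bR..<n]"
    using filter_take_drop[OF D, of "2*w"] lD w Dn[of "2*w"] by (simp add: bR_def)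
  define Rx where "Rx = take w (drop (2*w) D)"
  have Rx: "Rx = filter Q [bR..<Suc eR]"
  proof -
    have "take (Suc (w-1)) (drop (2*w) D) = filter Q [bR..<Suc ((drop (2*w) D)!(w-1))]"
      using filter_take_Suc[OF D2, of "w-1"] lD w by simp
    moreover have "(drop (2*w) D)!(w-1) = eR" using lD w Dn[of "2*w + (w-1)"]
      by (simp add: eR_def algebra_simps)
    ultimately show ?thesis using w by (simp add: Rx_def)
  qed
  have lRx: "length Rx = w" using lD by (simp add: Rx_def)
  have ord: "a \<le> bM" "bM \<le> eM" "eM < bR" "bR \<le> eR" "eR < n"
  proof -
    have lt: "\<And>u v. u < v \<Longrightarrow> v < length P \<Longrightarrow> P!u < P!v"
      using sP sorted_wrt_nth_less by blast
    show "a \<le> bM" using lt[of i "i+w"] i w by (simp add: a_def bM_def)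
    show "bM \<le> eM"
    proof (cases "w = 1")
      case True then show ?thesis by (simp add: bM_def eM_def)
    next
      case False
      then have "i+w < i+2*w-1" "i+2*w-1 < length P" using i w by auto
      then show ?thesis using lt[of "i+w" "i+2*w-1"] by (simp add: bM_def eM_def)
    qed
    show "eM < bR" using lt[of "i+2*w-1" "i+2*w"] i w by (simp add: bR_def eM_def)
    show "bR \<le> eR"
    proof (cases "w = 1")
      case True then show ?thesis by (simp add: bR_def eR_def)
    next
      case False
      then have "i+2*w < i+3*w-1" "i+3*w-1 < length P" using i w by auto
      then show ?thesis using lt[of "i+2*w" "i+3*w-1"] by (simp add: bR_def eR_def)
    qed
    show "eR < n" using Pn i w by (simp add: eR_def)
  qed
  have gap: "filter Q [Suc eM..<bR] = []"
  proof -
    have d1: "drop (2*w-1) D = filter Q [eM..<n]"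
      using filter_take_drop[OF D, of "2*w-1"] lD w Dn[of "2*w-1"] by (simp add: eM_def algebra_simps)
    have "drop (2*w-1) D = D!(2*w-1) # drop (2*w) D"
      using lD w Cons_nth_drop_Suc[of "2*w-1" D] by (simp add: Suc_diff_Suc)
    moreover have "D!(2*w-1) = eM" using lD w Dn[of "2*w-1"] by (simp add: eM_def algebra_simps)
    ultimately have e1: "filter Q [eM..<n] = eM # filter Q [bR..<n]" using d1 D2 by simp
    have "eM \<in> set (filter Q [eM..<n])" using e1 by simp
    then have "Q eM" by simp
    then have "filter Q [eM..<n] = eM # filter Q [Suc eM..<n]" using ord by (simp add: upt_conv_Cons)
    then have "filter Q [Suc eM..<n] = filter Q [bR..<n]" using e1 by simp
    moreover have "filter Q [Suc eM..<n] = filter Q [Suc eM..<bR] @ filter Q [bR..<n]"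
      using ord filter_upt_split[of "Suc eM" bR n Q] by simp
    ultimately show ?thesis by simp
  qed
  have long: "bM + w \<le> eM"
  proof (rule ccontr)
    assume c: "\<not> bM + w \<le> eM"
    have Mw: "window w (mk cs) (i+w) = map (\<lambda>k. (fst (cs!k), k)) (take w (drop (i+w) P))"
      using mkx window_map by simp
    have "deletion_free w (window w (mk cs) (i+w))"
      unfolding deletion_free_def
    proof (intro allI impI)
      fix k assume k: "k < w"
      have e: "window w (mk cs) (i+w) ! k = (fst (cs!(P!(i+w+k))), P!(i+w+k))"
        using Mw k i by (simp add: add.assoc)
      have e0: "window w (mk cs) (i+w) ! 0 = (fst (cs!(P!(i+w))), P!(i+w))"
        using Mw k i by simp
      have ge1: "P!(i+w) + k \<le> P!(i+w+k)" using sorted_nth_add[OF sP, of "i+w" k] k i by simp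
      have ge2: "P!(i+w+k) + (w-1-k) \<le> P!(i+w+k+(w-1-k))" using sorted_nth_add[OF sP, of "i+w+k" "w-1-k"] k i by simp
      have "i+w+k+(w-1-k) = i+2*w-1" using k by simp
      then have "P!(i+w+k) + (w-1-k) \<le> eM" using ge2 by (simp add: eM_def)
      then have "P!(i+w+k) = P!(i+w) + k" using ge1 c k by (simp add: bM_def)
      then show "snd (window w (mk cs) (i+w) ! k) = snd (window w (mk cs) (i+w) ! 0) + k"
        using e e0 by simp
    qed
    then show False using nd by simp
  qed
  define j where "j = length (filter Q' [0..<a])"
  have P'split: "P' = filter Q' [0..<a] @ filter Q' [a..<n]"
    using ord filter_upt_split[of 0 a n Q'] by (simp add: P'_def)
  have dj: "drop j P' = filter Q' [a..<n]" using P'split by (simp add: j_def)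
  have s1: "filter Q' [a..<bM] = Lx"
  proof -
    have "filter Q' [a..<bM] = filter Q [a..<bM]"
    proof (rule filter_cong[OF refl])
      fix k assume "k \<in> set [a..<bM]"
      then have "a \<le> k" "k < bM" by auto
      then show "Q' k = Q k" using pat ord unfolding Q_def Q'_def a_def bM_def eM_def eR_def by auto
    qed
    then show ?thesis using Lx by simp
  qed
  have s2: "filter Q' [bM..<Suc eM] = [bM..<Suc eM]"
  proof (rule filter_True, rule ballI)
    fix k assume "k \<in> set [bM..<Suc eM]"
    then have "bM \<le> k" "k \<le> eM" by auto
    then show "Q' k" using pat ord unfolding Q'_def a_def bM_def eM_def eR_def by auto
  qed
  have s3: "filter Q' [Suc eM..<Suc eR] = Rx"
  proof -
    have "filter Q' [Suc eM..<Suc eR] = filter Q [Suc eM..<Suc eR]"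
    proof (rule filter_cong[OF refl])
      fix k assume "k \<in> set [Suc eM..<Suc eR]"
      then have "eM < k" "k \<le> eR" by auto
      then show "Q' k = Q k" using pat ord unfolding Q_def Q'_def a_def bM_def eM_def eR_def by auto
    qed
    also have "\<dots> = filter Q [Suc eM..<bR] @ filter Q [bR..<Suc eR]"
      using ord filter_upt_split[of "Suc eM" bR "Suc eR" Q] by simp
    finally show ?thesis using gap Rx by simp
  qed
  have djs: "drop j P' = Lx @ [bM..<Suc eM] @ Rx @ filter Q' [Suc eR..<n]"
  proof -
    have "filter Q' [a..<n] = filter Q' [a..<bM] @ filter Q' [bM..<n]"
      using ord filter_upt_split[of a bM n Q'] by simp
    moreover have "filter Q' [bM..<n] = filter Q' [bM..<Suc eM] @ filter Q' [Suc eM..<n]"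
      using ord filter_upt_split[of bM "Suc eM" n Q'] by simp
    moreover have "filter Q' [Suc eM..<n] = filter Q' [Suc eM..<Suc eR] @ filter Q' [Suc eR..<n]"
      using ord filter_upt_split[of "Suc eM" "Suc eR" n Q'] by simp
    ultimately show ?thesis using dj s1 s2 s3 by simp
  qed
  define j' where "j' = j + w + (Suc eM - bM)"
  have wy1: "take w (drop j P') = Lx" using djs lLx by simp
  have wy2: "take w (drop j' P') = Rx"
  proof -
    have "drop j' P' = drop (w + (Suc eM - bM)) (drop j P')" by (simp add: j'_def algebra_simps)
    also have "\<dots> = Rx @ filter Q' [Suc eR..<n]" using djs lLx ord by simp
    finally show ?thesis using lRx by simp
  qed
  have lenP': "j' + w \<le> length P'"
  proof -
    have "length P' = j + length (drop j P')"
      using P'split by (simp add: j_def)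
    then show ?thesis using djs lLx lRx ord by (simp add: j'_def)
  qed
  have dLx: "distinct Lx" using Lx by simp
  have dRx: "distinct Rx" using Rx by simp
  have wx1: "window w (mk cs) i = map (\<lambda>k. (fst (cs!k), k)) Lx"
    using mkx window_map by (simp add: Lx_def D_def)
  have wx2: "window w (mk cs) (i+2*w) = map (\<lambda>k. (fst (cs!k), k)) Rx"
    using mkx window_map by (simp add: Rx_def D_def add.commute)
  have m1: "matches w (window w (mk cs) i) (window w (mk cs') j)"
    using wx1 mky window_map[of w _ P' j] wy1 matches_map[OF dLx lLx] hL Lx
    unfolding Q_def a_def bM_def by simp
  have m2: "matches w (window w (mk cs) (i+2*w)) (window w (mk cs') j')"
    using wx2 mky window_map[of w _ P' j'] wy2 matches_map[OF dRx lRx] hR Rx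
    unfolding Q_def bR_def eR_def by simp
  have "j + 2*w < j'" using long by (simp add: j'_def)
  moreover have "j' + w \<le> length (mk cs')" using lenP' mky by simp
  ultimately show ?thesis using m1 m2 by blast
qed


lemma list_pmf_nn_prod:
  "(\<integral>\<^sup>+xs. (\<Prod>k<length qs. f k (xs!k)) \<partial>list_pmf qs) = (\<Prod>k<length qs. \<integral>\<^sup>+x. f k x \<partial>(qs!k))"
proof (induction qs arbitrary: f)
  case Nil
  then show ?case by simp
next
  case (Cons q qs)
  have "(\<integral>\<^sup>+xs. (\<Prod>k<length (q#qs). f k (xs!k)) \<partial>list_pmf (q#qs))
     = (\<integral>\<^sup>+x. \<integral>\<^sup>+xs. f 0 x * (\<Prod>k<length qs. f (Suc k) (xs!k)) \<partial>list_pmf qs \<partial>q)"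
    unfolding length_Cons prod.lessThan_Suc_shift by simp
  also have "\<dots> = (\<integral>\<^sup>+x. f 0 x * (\<Prod>k<length qs. \<integral>\<^sup>+x. f (Suc k) x \<partial>(qs!k)) \<partial>q)"
    using Cons.IH[of "\<lambda>k. f (Suc k)"] by (simp add: nn_integral_cmult)
  also have "\<dots> = (\<integral>\<^sup>+x. f 0 x \<partial>q) * (\<Prod>k<length qs. \<integral>\<^sup>+x. f (Suc k) x \<partial>(qs!k))"
    by (simp add: nn_integral_multc)
  also have "\<dots> = (\<Prod>k<length (q#qs). \<integral>\<^sup>+x. f k x \<partial>((q#qs)!k))"
    unfolding length_Cons prod.lessThan_Suc_shift by simp
  finally show ?case .
qed

lemma set_list_pmf_length: "xs \<in> set_pmf (list_pmf qs) \<Longrightarrow> length xs = length qs"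
  by (induction qs arbitrary: xs) auto

lemma finite_set_list_pmf: "(\<And>k. k < length qs \<Longrightarrow> finite (set_pmf (qs!k))) \<Longrightarrow> finite (set_pmf (list_pmf qs))"
proof (induction qs)
  case Nil then show ?case by simp
next
  case (Cons q qs)
  have fq: "finite (set_pmf q)" using Cons.prems[of 0] by simp
  have "finite (set_pmf (list_pmf qs))" using Cons.IH Cons.prems by fastforce
  then have "finite (\<Union>x\<in>set_pmf q. (\<lambda>xs. x # xs) ` set_pmf (list_pmf qs))" using fq by auto
  moreover have "set_pmf (list_pmf (q#qs)) = (\<Union>x\<in>set_pmf q. (\<lambda>xs. x # xs) ` set_pmf (list_pmf qs))"
    by auto
  ultimately show ?case by simp
qed

lemma list_pmf_exp_prod:
  fixes f :: "nat \<Rightarrow> 'a \<Rightarrow> real"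
  assumes fin: "\<And>k. k < length qs \<Longrightarrow> finite (set_pmf (qs!k))" and nn: "\<And>k x. 0 \<le> f k x"
  shows "measure_pmf.expectation (list_pmf qs) (\<lambda>xs. \<Prod>k<length qs. f k (xs!k))
       = (\<Prod>k<length qs. measure_pmf.expectation (qs!k) (f k))"
proof -
  have fin2: "finite (set_pmf (list_pmf qs))" using finite_set_list_pmf fin by blast
  have "ennreal (measure_pmf.expectation (list_pmf qs) (\<lambda>xs. \<Prod>k<length qs. f k (xs!k)))
      = (\<integral>\<^sup>+xs. ennreal (\<Prod>k<length qs. f k (xs!k)) \<partial>list_pmf qs)"
    by (rule nn_integral_eq_integral[symmetric]) (auto intro!: integrable_measure_pmf_finite fin2 prod_nonneg nn)
  also have "\<dots> = (\<integral>\<^sup>+xs. (\<Prod>k<length qs. ennreal (f k (xs!k))) \<partial>list_pmf qs)"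
    by (simp add: prod_ennreal nn)
  also have "\<dots> = (\<Prod>k<length qs. \<integral>\<^sup>+x. ennreal (f k x) \<partial>(qs!k))"
    by (rule list_pmf_nn_prod)
  also have "\<dots> = (\<Prod>k<length qs. ennreal (measure_pmf.expectation (qs!k) (f k)))"
    by (intro prod.cong refl nn_integral_eq_integral) (auto intro!: integrable_measure_pmf_finite fin nn)
  also have "\<dots> = ennreal (\<Prod>k<length qs. measure_pmf.expectation (qs!k) (f k))"
    by (rule prod_ennreal) (auto intro!: integral_nonneg_AE nn)
  finally show ?thesis
    by (subst (asm) ennreal_inj) (auto intro!: integral_nonneg_AE prod_nonneg nn)
qed

lemma prod_indicator_if:
  fixes M :: nat
  shows "(\<Prod>k<M. (indicator (A k) (x k) :: 'b::{comm_semiring_1})) = (if \<forall>k<M. x k \<in> A k then 1 else 0)"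
  by (induction M arbitrary: A x) (auto simp: less_Suc_eq)

lemma list_pmf_replicate_all:
  "measure_pmf.prob (list_pmf (replicate M q)) {Y. \<forall>y\<in>set Y. R y} = (measure_pmf.prob q {y. R y}) ^ M"
proof -
  have "emeasure (list_pmf (replicate M q)) {Y. \<forall>y\<in>set Y. R y}
      = (\<integral>\<^sup>+Y. indicator {Y. \<forall>y\<in>set Y. R y} Y \<partial>list_pmf (replicate M q))"
    by simp
  also have "\<dots> = (\<integral>\<^sup>+Y. (\<Prod>k<length (replicate M q). indicator {y. R y} (Y!k)) \<partial>list_pmf (replicate M q))"
  proof (rule nn_integral_cong_AE)
    show "AE Y in measure_pmf (list_pmf (replicate M q)). indicator {Y. \<forall>y\<in>set Y. R y} Y
        = (\<Prod>k<length (replicate M q). indicator {y. R y} (Y!k) :: ennreal)"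
      unfolding AE_measure_pmf_iff
    proof
      fix Y assume "Y \<in> set_pmf (list_pmf (replicate M q))"
      then have l: "length Y = M" using set_list_pmf_length by fastforce
      show "indicator {Y. \<forall>y\<in>set Y. R y} Y = (\<Prod>k<length (replicate M q). indicator {y. R y} (Y!k) :: ennreal)"
        using l by (subst prod_indicator_if) (auto simp: all_set_conv_all_nth indicator_def)
    qed
  qed
  also have "\<dots> = (\<Prod>k<length (replicate M q). \<integral>\<^sup>+y. indicator {y. R y} y \<partial>(replicate M q ! k))"
    by (rule list_pmf_nn_prod)
  also have "\<dots> = (emeasure q {y. R y}) ^ M" by simp
  finally have "ennreal (measure_pmf.prob (list_pmf (replicate M q)) {Y. \<forall>y\<in>set Y. R y})
      = ennreal ((measure_pmf.prob q {y. R y}) ^ M)"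
    by (simp add: measure_pmf.emeasure_eq_measure ennreal_power)
  then show ?thesis by (simp add: ennreal_inj)
qed


definition cfgq :: "real \<Rightarrow> (nat \<Rightarrow> real) \<Rightarrow> nat \<Rightarrow> (bool \<times> bool) pmf" where
  "cfgq \<delta> p k = pair_pmf (bernoulli_pmf (p k)) (bernoulli_pmf \<delta>)"

definition cfg :: "real \<Rightarrow> nat \<Rightarrow> (nat \<Rightarrow> real) \<Rightarrow> (bool \<times> bool) list pmf" where
  "cfg \<delta> n p = list_pmf (map (cfgq \<delta> p) [0..<n])"

lemma pos_pmf_map: "pos_pmf \<delta> p k = map_pmf (\<lambda>(t,d). if d then [] else [(t,k)]) (cfgq \<delta> p k)"
  by (simp add: pos_pmf_def cfgq_def pair_pmf_def map_bind_pmf)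

lemma list_pmf_map_map:
  "list_pmf (map (\<lambda>k. map_pmf (h k) (g k)) ks) = map_pmf (\<lambda>cs. map (\<lambda>(k,c). h k c) (zip ks cs)) (list_pmf (map g ks))"
proof (induction ks)
  case Nil then show ?case by simp
next
  case (Cons k ks)
  show ?case
    by (simp add: Cons.IH bind_map_pmf map_bind_pmf)
qed

lemma concat_map_filter:
  "concat (map (\<lambda>k. if Q k then [f k] else []) xs) = map f (filter Q xs)"
  by (induction xs) auto

lemma mk_concat:
  assumes "length cs = n"
  shows "concat (map (\<lambda>(k,c). (\<lambda>(t,d). if d then [] else [(t,k)]) c) (zip [0..<n] cs)) = mk cs"
proof -
  have z: "zip [0..<n] cs = map (\<lambda>k. (k, cs!k)) [0..<n]"
    using assms by (simp add: list_eq_iff_nth_eq)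
  have "map (\<lambda>(k,c). (\<lambda>(t,d). if d then [] else [(t,k)]) c) (zip [0..<n] cs)
      = map (\<lambda>k. if \<not> snd (cs!k) then [(fst (cs!k), k)] else []) [0..<n]"
    unfolding z by (auto simp: split_beta)
  then show ?thesis using assms by (simp add: concat_map_filter mk_def)
qed

lemma trace_eq: "trace_pmf \<delta> n p = map_pmf mk (cfg \<delta> n p)"
proof -
  have "trace_pmf \<delta> n p = map_pmf concat (list_pmf (map (\<lambda>k. map_pmf (\<lambda>(t,d). if d then [] else [(t,k)]) (cfgq \<delta> p k)) [0..<n]))"
  proof -
    have "pos_pmf \<delta> p = (\<lambda>k. map_pmf (\<lambda>(t,d). if d then [] else [(t,k)]) (cfgq \<delta> p k))"
      by (rule ext) (rule pos_pmf_map)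
    then show ?thesis by (simp add: trace_pmf_def)
  qed
  also have "\<dots> = map_pmf (\<lambda>cs. concat (map (\<lambda>(k,c). (\<lambda>(t,d). if d then [] else [(t,k)]) c) (zip [0..<n] cs))) (cfg \<delta> n p)"
    by (simp add: list_pmf_map_map[where h="\<lambda>k. (\<lambda>(t,d). if d then [] else [(t,k)])"] map_pmf_comp cfg_def)
  also have "\<dots> = map_pmf mk (cfg \<delta> n p)"
  proof (rule map_pmf_cong[OF refl])
    fix cs assume "cs \<in> set_pmf (cfg \<delta> n p)"
    then have "length cs = n" using set_list_pmf_length unfolding cfg_def by fastforce
    then show "concat (map (\<lambda>(k,c). (\<lambda>(t,d). if d then [] else [(t,k)]) c) (zip [0..<n] cs)) = mk cs"
      by (rule mk_concat)
  qed
  finally show ?thesis .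
qed

lemma cfg_length: "cs \<in> set_pmf (cfg \<delta> n p) \<Longrightarrow> length cs = n"
  using set_list_pmf_length unfolding cfg_def by fastforce

lemma list_pmf_marginal:
  assumes "k < M"
  shows "(\<integral>\<^sup>+XI. f (XI!k) \<partial>list_pmf (replicate M q)) = (\<integral>\<^sup>+x. f x \<partial>q)"
proof -
  have e: "\<And>XI. (\<Prod>j<M. (if j = k then f else (\<lambda>_. 1)) (XI!j)) = f (XI!k)"
  proof -
    fix XI
    have "(\<Prod>j<M. (if j = k then f else (\<lambda>_. 1)) (XI!j)) = (\<Prod>j<M. if j = k then f (XI!j) else 1)"
      by (rule prod.cong) auto
    then show "(\<Prod>j<M. (if j = k then f else (\<lambda>_. 1)) (XI!j)) = f (XI!k)" using assms by simp
  qed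
  have "(\<integral>\<^sup>+XI. f (XI!k) \<partial>list_pmf (replicate M q))
     = (\<integral>\<^sup>+XI. (\<Prod>j<length (replicate M q). (if j = k then f else (\<lambda>_. 1)) (XI!j)) \<partial>list_pmf (replicate M q))"
    using e by simp
  also have "\<dots> = (\<Prod>j<length (replicate M q). \<integral>\<^sup>+x. (if j = k then f else (\<lambda>_. 1)) x \<partial>(replicate M q ! j))"
    by (rule list_pmf_nn_prod)
  also have "\<dots> = (\<integral>\<^sup>+x. f x \<partial>q)"
  proof -
    have "(\<Prod>j<M. \<integral>\<^sup>+x. (if j = k then f else (\<lambda>_. 1)) x \<partial>q) = (\<Prod>j<M. if j = k then (\<integral>\<^sup>+x. f x \<partial>q) else 1)"
      by (rule prod.cong) auto
    then show ?thesis using assms by simp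
  qed
  finally show ?thesis .
qed


definition good :: "nat \<Rightarrow> trace \<Rightarrow> nat \<Rightarrow> trace \<Rightarrow> bool" where
  "good w x i y \<longleftrightarrow> (\<exists>j j'. j + 2 * w < j' \<and> j' + w \<le> length y \<and>
        matches w (window w x i) (window w y j) \<and>
        matches w (window w x (i + 2 * w)) (window w y j'))"

definition Ev :: "nat \<Rightarrow> (trace \<times> nat) \<Rightarrow> trace list \<Rightarrow> bool" where
  "Ev w z Y \<longleftrightarrow> returns w Y (fst z) (snd z) \<and> \<not> deletion_free w (window w (fst z) (snd z + w))"

lemma Ev_sub:
  assumes "Ev w (x,i) Y"
  shows "i + 3*w \<le> length x" "\<not> deletion_free w (window w x (i + w))" "\<forall>y\<in>set Y. \<not> good w x i y"
  using assms unfolding Ev_def returns_def good_def by auto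

lemma h_bound:
  fixes G0 :: real
  assumes G01: "G0 \<le> 1"
  and ng: "\<And>i. i + 3*w \<le> length x \<Longrightarrow> \<not> deletion_free w (window w x (i+w)) \<Longrightarrow> G0 \<le> measure_pmf.prob q {y. good w x i y}"
  shows "emeasure (list_pmf (replicate MY q)) {Y. Ev w (x,i) Y} \<le> ennreal ((1 - G0)^MY)"
proof (cases "i + 3*w \<le> length x \<and> \<not> deletion_free w (window w x (i+w))")
  case True
  have "{Y. Ev w (x,i) Y} \<subseteq> {Y. \<forall>y\<in>set Y. \<not> good w x i y}" using Ev_sub by blast
  then have "emeasure (list_pmf (replicate MY q)) {Y. Ev w (x,i) Y} \<le> emeasure (list_pmf (replicate MY q)) {Y. \<forall>y\<in>set Y. \<not> good w x i y}"
    by (rule emeasure_mono) simp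
  also have "\<dots> = ennreal ((measure_pmf.prob q {y. \<not> good w x i y})^MY)"
    by (simp add: measure_pmf.emeasure_eq_measure list_pmf_replicate_all)
  also have "\<dots> \<le> ennreal ((1 - G0)^MY)"
  proof -
    have c: "measure_pmf.prob q {y. \<not> good w x i y} = 1 - measure_pmf.prob q {y. good w x i y}"
    proof -
      have "{y. \<not> good w x i y} = space (measure_pmf q) - {y. good w x i y}" by auto
      then show ?thesis using measure_pmf.prob_compl[of "{y. good w x i y}" q] by simp
    qed
    have "measure_pmf.prob q {y. \<not> good w x i y} \<le> 1 - G0" using c ng True by simp
    then show ?thesis by (intro ennreal_leI power_mono) auto
  qed
  finally show ?thesis .
next
  case False
  then have "{Y. Ev w (x,i) Y} = {}" using Ev_sub by blast
  then show ?thesis by simp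
qed

lemma per_p:
  fixes G0 :: real
  assumes G01: "G0 \<le> 1"
  and ng: "\<And>cs i. cs \<in> set_pmf (cfg \<delta> n p) \<Longrightarrow> nice cs \<Longrightarrow> i + 3*w \<le> length (mk cs) \<Longrightarrow>
        \<not> deletion_free w (window w (mk cs) (i+w)) \<Longrightarrow> G0 \<le> measure_pmf.prob (trace_pmf \<delta> n p) {y. good w (mk cs) i y}"
  shows "measure_pmf.prob (bind_pmf (list_pmf (replicate MX (pair_pmf (trace_pmf \<delta> n p) U)))
            (\<lambda>XI. bind_pmf (list_pmf (replicate MY (trace_pmf \<delta> n p))) (\<lambda>Y. return_pmf (XI, Y))))
           {(XI,Y). \<not> all_chunks_deletion_free w XI Y}
       \<le> real MX * ((1 - G0)^MY + measure_pmf.prob (cfg \<delta> n p) {cs. \<not> nice cs})"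
proof -
  define q where "q = trace_pmf \<delta> n p"
  define C where "C = cfg \<delta> n p"
  define XIs where "XIs = list_pmf (replicate MX (pair_pmf q U))"
  define Ys where "Ys = list_pmf (replicate MY q)"
  define B where "B = {(XI,Y). \<not> all_chunks_deletion_free w XI Y}"
  define c where "c = (1 - G0)^MY"
  have c0: "0 \<le> c" using G01 by (simp add: c_def)
  define h where "h = (\<lambda>z. emeasure Ys {Y. Ev w z Y})"
  have hX: "(\<integral>\<^sup>+z. h z \<partial>pair_pmf q U) \<le> ennreal c + emeasure C {cs. \<not> nice cs}"
  proof -
    have "(\<integral>\<^sup>+z. h z \<partial>pair_pmf q U) = (\<integral>\<^sup>+cs. \<integral>\<^sup>+i. h (mk cs, i) \<partial>U \<partial>C)"
      by (simp add: nn_integral_pair_pmf' q_def trace_eq C_def)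
    also have "\<dots> \<le> (\<integral>\<^sup>+cs. (ennreal c + indicator {cs. \<not> nice cs} cs) \<partial>C)"
    proof (rule nn_integral_mono_AE, unfold AE_measure_pmf_iff, intro ballI)
      fix cs assume cs: "cs \<in> set_pmf C"
      have "\<And>i. h (mk cs, i) \<le> ennreal c + indicator {cs. \<not> nice cs} cs"
      proof -
        fix i
        show "h (mk cs, i) \<le> ennreal c + indicator {cs. \<not> nice cs} cs"
        proof (cases "nice cs")
          case True
          have "h (mk cs, i) \<le> ennreal c" unfolding h_def Ys_def c_def
            by (rule h_bound[OF G01]) (use ng[OF cs[unfolded C_def] True] q_def in auto)
          then show ?thesis by (simp add: add_increasing2)
        next
          case False
          have "h (mk cs, i) \<le> 1" unfolding h_def by (rule measure_pmf.emeasure_le_1)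
          then show ?thesis using False by (simp add: add_increasing)
        qed
      qed
      then have "(\<integral>\<^sup>+i. h (mk cs, i) \<partial>U) \<le> (\<integral>\<^sup>+i. (ennreal c + indicator {cs. \<not> nice cs} cs) \<partial>U)"
        by (intro nn_integral_mono) auto
      then show "(\<integral>\<^sup>+i. h (mk cs, i) \<partial>U) \<le> ennreal c + indicator {cs. \<not> nice cs} cs"
        by simp
    qed
    also have "\<dots> = ennreal c + emeasure C {cs. \<not> nice cs}"
      by (simp add: nn_integral_add)
    finally show ?thesis .
  qed
  have "emeasure (bind_pmf XIs (\<lambda>XI. bind_pmf Ys (\<lambda>Y. return_pmf (XI, Y)))) B
      = (\<integral>\<^sup>+XI. \<integral>\<^sup>+Y. indicator B (XI,Y) \<partial>Ys \<partial>XIs)"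
    by simp
  also have "\<dots> \<le> (\<integral>\<^sup>+XI. \<integral>\<^sup>+Y. (\<Sum>k<MX. indicator {Y. Ev w (XI!k) Y} Y) \<partial>Ys \<partial>XIs)"
  proof (rule nn_integral_mono_AE)
    show "AE XI in measure_pmf XIs. (\<integral>\<^sup>+Y. indicator B (XI,Y) \<partial>Ys) \<le> (\<integral>\<^sup>+Y. (\<Sum>k<MX. indicator {Y. Ev w (XI!k) Y} Y) \<partial>Ys)"
      unfolding AE_measure_pmf_iff
    proof (intro ballI nn_integral_mono)
      fix XI Y assume XI: "XI \<in> set_pmf XIs"
      then have l: "length XI = MX" unfolding XIs_def using set_list_pmf_length by fastforce
      show "indicator B (XI,Y) \<le> (\<Sum>k<MX. indicator {Y. Ev w (XI!k) Y} Y :: ennreal)"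
      proof (cases "(XI,Y) \<in> B")
        case True
        then have "\<not> all_chunks_deletion_free w XI Y" by (simp add: B_def)
        then have "\<not> (\<forall>z\<in>set XI. returns w Y (fst z) (snd z) \<longrightarrow> deletion_free w (window w (fst z) (snd z + w)))"
          unfolding all_chunks_deletion_free_def case_prod_beta .
        then have "\<exists>z\<in>set XI. Ev w z Y" unfolding Ev_def by blast
        then obtain z where z: "z \<in> set XI" "Ev w z Y" by blast
        from z(1) obtain k where k0: "k < length XI" "XI!k = z" by (meson in_set_conv_nth)
        then have k: "k < MX" "XI!k = z" using l by simp_all
        then have "Ev w (XI!k) Y" using z by simp
        then have "indicator {Y. Ev w (XI!k) Y} Y = (1::ennreal)" by simp
        then have "(1::ennreal) \<le> (\<Sum>k<MX. indicator {Y. Ev w (XI!k) Y} Y)"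
          using k member_le_sum[of k "{..<MX}" "\<lambda>k. indicator {Y. Ev w (XI!k) Y} Y :: ennreal"] by simp
        then show ?thesis using True by simp
      qed simp
    qed
  qed
  also have "\<dots> = (\<Sum>k<MX. \<integral>\<^sup>+XI. h (XI!k) \<partial>XIs)"
    by (simp add: nn_integral_sum h_def)
  also have "\<dots> = (\<Sum>k<MX. \<integral>\<^sup>+z. h z \<partial>pair_pmf q U)"
    unfolding XIs_def by (intro sum.cong refl list_pmf_marginal) simp
  also have "\<dots> = of_nat MX * (\<integral>\<^sup>+z. h z \<partial>pair_pmf q U)" by simp
  also have "\<dots> \<le> of_nat MX * (ennreal c + emeasure C {cs. \<not> nice cs})"
    using hX by (rule mult_left_mono) simp
  also have "\<dots> = ennreal (real MX * (c + measure_pmf.prob C {cs. \<not> nice cs}))"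
  proof -
    have e1: "ennreal c + emeasure C {cs. \<not> nice cs} = ennreal (c + measure_pmf.prob C {cs. \<not> nice cs})"
      using c0 by (simp add: measure_pmf.emeasure_eq_measure ennreal_plus)
    have e2: "(of_nat MX :: ennreal) = ennreal (real MX)" by (rule ennreal_of_nat_eq_real_of_nat)
    show ?thesis unfolding e1 e2 using c0 by (simp add: ennreal_mult)
  qed
  finally have "ennreal (measure_pmf.prob (bind_pmf XIs (\<lambda>XI. bind_pmf Ys (\<lambda>Y. return_pmf (XI, Y)))) B)
     \<le> ennreal (real MX * (c + measure_pmf.prob C {cs. \<not> nice cs}))"
    by (simp only: measure_pmf.emeasure_eq_measure)
  then have "measure_pmf.prob (bind_pmf XIs (\<lambda>XI. bind_pmf Ys (\<lambda>Y. return_pmf (XI, Y)))) B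
     \<le> real MX * (c + measure_pmf.prob C {cs. \<not> nice cs})"
    using c0 by (subst (asm) ennreal_le_iff) auto
  then show ?thesis unfolding B_def XIs_def Ys_def q_def c_def C_def .
qed


definition E2 :: "real \<Rightarrow> real \<Rightarrow> (bool \<times> bool \<Rightarrow> real) \<Rightarrow> real" where
  "E2 a b F = a*b*F(True,True) + a*(1-b)*F(True,False) + (1-a)*b*F(False,True) + (1-a)*(1-b)*F(False,False)"

lemma finite_cfgq: "finite (set_pmf (cfgq \<delta> p k))"
  by (rule finite_subset[of _ UNIV]) auto

lemma expect_cfgq:
  assumes "0 \<le> p k" "p k \<le> 1" "0 \<le> \<delta>" "\<delta> \<le> 1"
  shows "measure_pmf.expectation (cfgq \<delta> p k) F = E2 (p k) \<delta> F"
proof -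
  have "measure_pmf.expectation (cfgq \<delta> p k) F = (\<Sum>z\<in>UNIV. pmf (cfgq \<delta> p k) z *\<^sub>R F z)"
    by (rule integral_measure_pmf) auto
  also have "\<dots> = E2 (p k) \<delta> F"
  proof -
    have U: "(UNIV::(bool\<times>bool) set) = {(True,True),(True,False),(False,True),(False,False)}"
    proof (rule set_eqI)
      fix z :: "bool \<times> bool" show "z \<in> UNIV \<longleftrightarrow> z \<in> {(True,True),(True,False),(False,True),(False,False)}"
        by (cases z) auto
    qed
    show ?thesis using assms by (simp add: U cfgq_def pmf_pair E2_def algebra_simps)
  qed
  finally show ?thesis .
qed

lemma cfg_expect_prod:
  assumes p01: "\<And>k. k < n \<Longrightarrow> 0 \<le> p k \<and> p k \<le> 1" and d01: "0 \<le> \<delta>" "\<delta> \<le> 1"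
  and nn: "\<And>k z. 0 \<le> g k z"
  shows "measure_pmf.expectation (cfg \<delta> n p) (\<lambda>c. \<Prod>k<n. g k (c!k)) = (\<Prod>k<n. E2 (p k) \<delta> (g k))"
proof -
  have "measure_pmf.expectation (cfg \<delta> n p) (\<lambda>c. \<Prod>k<length (map (cfgq \<delta> p) [0..<n]). g k (c!k))
      = (\<Prod>k<length (map (cfgq \<delta> p) [0..<n]). measure_pmf.expectation (map (cfgq \<delta> p) [0..<n] ! k) (g k))"
    unfolding cfg_def by (rule list_pmf_exp_prod) (auto simp: finite_cfgq nn)
  then show ?thesis using p01 d01 by (simp add: expect_cfgq)
qed

lemma cfg_measure_le:
  assumes p01: "\<And>k. k < n \<Longrightarrow> 0 \<le> p k \<and> p k \<le> 1" and d01: "0 \<le> \<delta>" "\<delta> \<le> 1"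
  and nn: "\<And>k z. 0 \<le> g k z"
  and dom: "\<And>c. c \<in> set_pmf (cfg \<delta> n p) \<Longrightarrow> c \<in> A \<Longrightarrow> 1 \<le> (\<Prod>k<n. g k (c!k))"
  shows "measure_pmf.prob (cfg \<delta> n p) A \<le> (\<Prod>k<n. E2 (p k) \<delta> (g k))"
proof -
  have fin: "finite (set_pmf (cfg \<delta> n p))" unfolding cfg_def
    by (rule finite_set_list_pmf) (auto simp: finite_cfgq)
  have "measure_pmf.prob (cfg \<delta> n p) A = measure_pmf.expectation (cfg \<delta> n p) (indicator A)"
    by simp
  also have "\<dots> \<le> measure_pmf.expectation (cfg \<delta> n p) (\<lambda>c. \<Prod>k<n. g k (c!k))"
  proof (rule integral_mono_AE)
    show "integrable (measure_pmf (cfg \<delta> n p)) (indicator A :: _ \<Rightarrow> real)"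
      by (rule integrable_measure_pmf_finite[OF fin])
    show "integrable (measure_pmf (cfg \<delta> n p)) (\<lambda>c. \<Prod>k<n. g k (c!k))"
      by (rule integrable_measure_pmf_finite[OF fin])
    show "AE c in measure_pmf (cfg \<delta> n p). indicator A c \<le> (\<Prod>k<n. g k (c!k))"
      unfolding AE_measure_pmf_iff using dom by (auto simp: indicator_def intro!: prod_nonneg nn)
  qed
  also have "\<dots> = (\<Prod>k<n. E2 (p k) \<delta> (g k))" by (rule cfg_expect_prod[OF p01 d01 nn])
  finally show ?thesis .
qed

lemma cfg_measure_eq:
  assumes p01: "\<And>k. k < n \<Longrightarrow> 0 \<le> p k \<and> p k \<le> 1" and d01: "0 \<le> \<delta>" "\<delta> \<le> 1"
  and nn: "\<And>k z. 0 \<le> g k z"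
  and eq: "\<And>c. c \<in> set_pmf (cfg \<delta> n p) \<Longrightarrow> indicator A c = (\<Prod>k<n. g k (c!k))"
  shows "measure_pmf.prob (cfg \<delta> n p) A = (\<Prod>k<n. E2 (p k) \<delta> (g k))"
proof -
  have "measure_pmf.prob (cfg \<delta> n p) A = measure_pmf.expectation (cfg \<delta> n p) (indicator A)"
    by simp
  also have "\<dots> = measure_pmf.expectation (cfg \<delta> n p) (\<lambda>c. \<Prod>k<n. g k (c!k))"
    by (rule integral_cong_AE) (auto simp: AE_measure_pmf_iff eq)
  also have "\<dots> = (\<Prod>k<n. E2 (p k) \<delta> (g k))" by (rule cfg_expect_prod[OF p01 d01 nn])
  finally show ?thesis .
qed


definition rr :: "real \<Rightarrow> bool \<Rightarrow> real" where "rr q t = (if t then 1 - q else q)"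

lemma card_filter_upt: "card {k. lo \<le> k \<and> k < hi \<and> Q k} = length (filter Q [lo..<hi])"
proof -
  have "set (filter Q [lo..<hi]) = {k. lo \<le> k \<and> k < hi \<and> Q k}" by auto
  then show ?thesis by (metis distinct_card distinct_filter distinct_upt)
qed

lemma card_split_upt:
  "card {k. lo \<le> k \<and> k < hi \<and> Q k} + card {k. lo \<le> k \<and> k < hi \<and> \<not> Q k} = hi - lo"
proof -
  have "{k. lo \<le> k \<and> k < hi \<and> Q k} \<union> {k. lo \<le> k \<and> k < hi \<and> \<not> Q k} = {lo..<hi}" by auto
  moreover have "{k. lo \<le> k \<and> k < hi \<and> Q k} \<inter> {k. lo \<le> k \<and> k < hi \<and> \<not> Q k} = {}" by auto
  ultimately show ?thesis
    by (metis (no_types, lifting) card_Un_disjoint card_atLeastLessThan finite_Un finite_atLeastLessThan)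
qed

lemma struct_facts:
  assumes P: "P = filter Q [0..<n]"
  and i: "i + 3*w \<le> length P" and w: "0 < w"
  shows "length (filter Q [P!i..<P!(i+w)]) = w"
    "length (filter Q [P!(i+2*w)..<Suc (P!(i+3*w-1))]) = w"
    "length (filter Q [P!i..<Suc (P!(i+3*w-1))]) = 3*w"
    "P!i \<le> P!(i+w)" "P!(i+w) \<le> P!(i+2*w-1)" "P!(i+2*w-1) < P!(i+2*w)"
    "P!(i+2*w) \<le> P!(i+3*w-1)" "P!(i+3*w-1) < n"
    "take w (drop i P) = filter Q [P!i..<P!(i+w)]"
    "take w (drop (i+2*w) P) = filter Q [P!(i+2*w)..<Suc (P!(i+3*w-1))]"
proof -
  define a where "a = P!i"
  define bM where "bM = P!(i+w)"
  define eM where "eM = P!(i+2*w-1)"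
  define bR where "bR = P!(i+2*w)"
  define eR where "eR = P!(i+3*w-1)"
  have sP: "sorted_wrt (<) P" using P by (simp add: sorted_wrt_filter)
  have Pn: "\<forall>x\<in>set P. x < n" using P by simp
  define D where "D = drop i P"
  have D: "D = filter Q [a..<n]" using filter_take_drop[OF P, of i] i w by (simp add: D_def a_def)
  have lD: "length D \<ge> 3*w" using i by (simp add: D_def)
  have Dn: "\<And>k. k < length D \<Longrightarrow> D!k = P!(i+k)" using i by (simp add: D_def)
  have Lx: "take w D = filter Q [a..<bM]"
    using filter_take_drop[OF D, of w] lD w Dn[of w] by (simp add: bM_def)
  have D2: "drop (2*w) D = filter Q [bR..<n]"
    using filter_take_drop[OF D, of "2*w"] lD w Dn[of "2*w"] by (simp add: bR_def)
  have Rx: "take w (drop (2*w) D) = filter Q [bR..<Suc eR]"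
  proof -
    have "take (Suc (w-1)) (drop (2*w) D) = filter Q [bR..<Suc ((drop (2*w) D)!(w-1))]"
      using filter_take_Suc[OF D2, of "w-1"] lD w by simp
    moreover have "(drop (2*w) D)!(w-1) = eR" using lD w Dn[of "2*w + (w-1)"]
      by (simp add: eR_def algebra_simps)
    ultimately show ?thesis using w by simp
  qed
  have All: "take (3*w) D = filter Q [a..<Suc eR]"
  proof -
    have "take (Suc (3*w-1)) D = filter Q [a..<Suc (D!(3*w-1))]"
      using filter_take_Suc[OF D, of "3*w-1"] lD w by simp
    moreover have "D!(3*w-1) = eR" using lD w Dn[of "3*w-1"] by (simp add: eR_def algebra_simps)
    ultimately show ?thesis using w by simp
  qed
  show "length (filter Q [P!i..<P!(i+w)]) = w" proof -
    have "length (take w D) = w" using lD by simp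
    then show ?thesis using Lx unfolding a_def bM_def by simp
  qed
  show "length (filter Q [P!(i+2*w)..<Suc (P!(i+3*w-1))]) = w"
  proof -
    have "length (take w (drop (2*w) D)) = w" using lD by simp
    then show ?thesis using Rx unfolding bR_def eR_def by metis
  qed
  show "length (filter Q [P!i..<Suc (P!(i+3*w-1))]) = 3*w"
  proof -
    have "length (take (3*w) D) = 3*w" using lD by simp
    then show ?thesis using All unfolding a_def eR_def by metis
  qed
  show "take w (drop i P) = filter Q [P!i..<P!(i+w)]" using Lx unfolding D_def a_def bM_def .
  show "take w (drop (i+2*w) P) = filter Q [P!(i+2*w)..<Suc (P!(i+3*w-1))]" using Rx unfolding D_def bR_def eR_def by (simp add: add.commute)
  have lt: "\<And>u v. u < v \<Longrightarrow> v < length P \<Longrightarrow> P!u < P!v"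
    using sP sorted_wrt_nth_less by blast
  show "P!i \<le> P!(i+w)" using lt[of i "i+w"] i w by simp
  show "P!(i+w) \<le> P!(i+2*w-1)"
  proof (cases "w = 1")
    case True then show ?thesis by simp
  next
    case False
    then have "i+w < i+2*w-1" "i+2*w-1 < length P" using i w by auto
    then show ?thesis using lt[of "i+w" "i+2*w-1"] by simp
  qed
  show "P!(i+2*w-1) < P!(i+2*w)" using lt[of "i+2*w-1" "i+2*w"] i w by simp
  show "P!(i+2*w) \<le> P!(i+3*w-1)"
  proof (cases "w = 1")
    case True then show ?thesis by simp
  next
    case False
    then have "i+2*w < i+3*w-1" "i+3*w-1 < length P" using i w by auto
    then show ?thesis using lt[of "i+2*w" "i+3*w-1"] by simp
  qed
  show "P!(i+3*w-1) < n" using Pn i w by simp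
qed


lemma cfg_measure_leL:
  assumes p01: "\<And>k. k < n \<Longrightarrow> 0 \<le> p k \<and> p k \<le> 1" and d01: "0 \<le> \<delta>" "\<delta> \<le> 1"
  and nn: "\<And>k z. 0 \<le> g k z" and L: "0 \<le> L"
  and dom: "\<And>c. c \<in> set_pmf (cfg \<delta> n p) \<Longrightarrow> c \<in> A \<Longrightarrow> L \<le> (\<Prod>k<n. g k (c!k))"
  shows "L * measure_pmf.prob (cfg \<delta> n p) A \<le> (\<Prod>k<n. E2 (p k) \<delta> (g k))"
proof -
  have fin: "finite (set_pmf (cfg \<delta> n p))" unfolding cfg_def
    by (rule finite_set_list_pmf) (auto simp: finite_cfgq)
  have "L * measure_pmf.prob (cfg \<delta> n p) A = measure_pmf.expectation (cfg \<delta> n p) (\<lambda>c. L * indicator A c)"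
    by simp
  also have "\<dots> \<le> measure_pmf.expectation (cfg \<delta> n p) (\<lambda>c. \<Prod>k<n. g k (c!k))"
  proof (rule integral_mono_AE)
    show "integrable (measure_pmf (cfg \<delta> n p)) (\<lambda>c. L * indicator A c :: real)"
      by (rule integrable_measure_pmf_finite[OF fin])
    show "integrable (measure_pmf (cfg \<delta> n p)) (\<lambda>c. \<Prod>k<n. g k (c!k))"
      by (rule integrable_measure_pmf_finite[OF fin])
    show "AE c in measure_pmf (cfg \<delta> n p). L * indicator A c \<le> (\<Prod>k<n. g k (c!k))"
      unfolding AE_measure_pmf_iff using dom by (auto simp: indicator_def intro!: prod_nonneg nn)
  qed
  also have "\<dots> = (\<Prod>k<n. E2 (p k) \<delta> (g k))" by (rule cfg_expect_prod[OF p01 d01 nn])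
  finally show ?thesis .
qed

lemma prod_01_if:
  fixes n :: nat
  shows "(\<Prod>k<n. if P k then (if Q k then 1 else 0) else (1::real)) = (if \<forall>k<n. P k \<longrightarrow> Q k then 1 else 0)"
  by (induction n) (auto simp: less_Suc_eq)

definition pf :: "real \<Rightarrow> nat \<Rightarrow> nat \<Rightarrow> (nat \<Rightarrow> bool) \<Rightarrow> nat \<Rightarrow> real" where
  "pf \<delta> a eR pd k = (if a \<le> k \<and> k \<le> eR then (if pd k then \<delta> else 1 - \<delta>) else 1)"

lemma pat_prob:
  assumes p01: "\<And>k. k < n \<Longrightarrow> 0 \<le> p k \<and> p k \<le> 1" and d01: "0 \<le> \<delta>" "\<delta> \<le> 1"
  shows "measure_pmf.prob (cfg \<delta> n p) {c'. length c' = n \<and> (\<forall>k<n. a \<le> k \<and> k \<le> eR \<longrightarrow> snd (c'!k) = pd k)}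
       = (\<Prod>k<n. pf \<delta> a eR pd k)"
proof -
  define g where "g = (\<lambda>k (z::bool\<times>bool). if a \<le> k \<and> k \<le> eR then (if snd z = pd k then 1 else 0) else (1::real))"
  have "measure_pmf.prob (cfg \<delta> n p) {c'. length c' = n \<and> (\<forall>k<n. a \<le> k \<and> k \<le> eR \<longrightarrow> snd (c'!k) = pd k)}
      = (\<Prod>k<n. E2 (p k) \<delta> (g k))"
  proof (rule cfg_measure_eq[OF p01 d01])
    show "\<And>k z. 0 \<le> g k z" by (simp add: g_def)
    fix c assume "c \<in> set_pmf (cfg \<delta> n p)"
    then have l: "length c = n" by (rule cfg_length)
    show "indicator {c'. length c' = n \<and> (\<forall>k<n. a \<le> k \<and> k \<le> eR \<longrightarrow> snd (c'!k) = pd k)} c = (\<Prod>k<n. g k (c!k))"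
      unfolding g_def prod_01_if using l by (simp add: indicator_def)
  qed
  also have "\<dots> = (\<Prod>k<n. pf \<delta> a eR pd k)"
    by (intro prod.cong refl) (auto simp: g_def pf_def E2_def algebra_simps)
  finally show ?thesis .
qed

lemma ham_prob:
  assumes p01: "\<And>k. k < n \<Longrightarrow> 0 \<le> p k \<and> p k \<le> 1" and d01: "0 \<le> \<delta>" "\<delta> \<le> 1"
  and u: "0 \<le> u"
  and S: "S \<subseteq> {k. a \<le> k \<and> k \<le> eR \<and> k < n}" and Spd: "\<forall>k\<in>S. \<not> pd k"
  shows "exp (u * \<theta>) * measure_pmf.prob (cfg \<delta> n p)
           {c'. length c' = n \<and> (\<forall>k<n. a \<le> k \<and> k \<le> eR \<longrightarrow> snd (c'!k) = pd k) \<and>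
                \<theta> \<le> real (card {k\<in>S. T k \<noteq> fst (c'!k)})}
       \<le> (\<Prod>k<n. pf \<delta> a eR pd k) * (\<Prod>k\<in>S. 1 + rr (p k) (T k) * (exp u - 1))"
proof -
  define g where "g = (\<lambda>k (z::bool\<times>bool). (if a \<le> k \<and> k \<le> eR then (if snd z = pd k then 1 else 0) else (1::real))
      * (if k \<in> S then exp (u * (if T k \<noteq> fst z then 1 else 0)) else 1))"
  have finS: "finite S" using S by (rule finite_subset) auto
  have Sn: "S \<subseteq> {..<n}" using S by auto
  have SI1: "S \<inter> {..<n} = S" "{..<n} \<inter> S = S" "{..<n} \<inter> {x. x \<in> S} = S" using Sn by auto
  have "exp (u * \<theta>) * measure_pmf.prob (cfg \<delta> n p)
           {c'. length c' = n \<and> (\<forall>k<n. a \<le> k \<and> k \<le> eR \<longrightarrow> snd (c'!k) = pd k) \<and>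
                \<theta> \<le> real (card {k\<in>S. T k \<noteq> fst (c'!k)})}
      \<le> (\<Prod>k<n. E2 (p k) \<delta> (g k))"
  proof (rule cfg_measure_leL[OF p01 d01])
    show "\<And>k z. 0 \<le> g k z" by (simp add: g_def)
    show "0 \<le> exp (u * \<theta>)" by simp
    fix c assume c: "c \<in> {c'. length c' = n \<and> (\<forall>k<n. a \<le> k \<and> k \<le> eR \<longrightarrow> snd (c'!k) = pd k) \<and>
                \<theta> \<le> real (card {k\<in>S. T k \<noteq> fst (c'!k)})}"
    have "(\<Prod>k<n. g k (c!k)) = (\<Prod>k<n. if k \<in> S then exp (u * (if T k \<noteq> fst (c!k) then 1 else 0)) else 1)"
      using c by (intro prod.cong refl) (auto simp: g_def)
    also have "\<dots> = (\<Prod>k\<in>S. exp (u * (if T k \<noteq> fst (c!k) then 1 else 0)))"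
      by (simp add: prod.If_cases SI1)
    also have "\<dots> = exp (u * (\<Sum>k\<in>S. (if T k \<noteq> fst (c!k) then 1 else 0)))"
      using finS by (simp add: exp_sum sum_distrib_left)
    also have "(\<Sum>k\<in>S. (if T k \<noteq> fst (c!k) then 1 else 0)) = real (card {k\<in>S. T k \<noteq> fst (c!k)})"
      using finS by (simp add: sum.If_cases Int_def conj_commute)
    finally have e: "(\<Prod>k<n. g k (c!k)) = exp (u * real (card {k\<in>S. T k \<noteq> fst (c!k)}))" .
    show "exp (u * \<theta>) \<le> (\<Prod>k<n. g k (c!k))"
      unfolding e using c u by (auto intro: mult_left_mono)
  qed
  also have "\<dots> = (\<Prod>k<n. pf \<delta> a eR pd k * (if k \<in> S then 1 + rr (p k) (T k) * (exp u - 1) else 1))"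
  proof (intro prod.cong refl)
    fix k assume k: "k \<in> {..<n}"
    show "E2 (p k) \<delta> (g k) = pf \<delta> a eR pd k * (if k \<in> S then 1 + rr (p k) (T k) * (exp u - 1) else 1)"
    proof (cases "k \<in> S")
      case True
      then have "a \<le> k \<and> k \<le> eR" "\<not> pd k" using S Spd by auto
      then show ?thesis using True by (cases "T k") (auto simp: g_def pf_def E2_def rr_def algebra_simps)
    next
      case False
      then show ?thesis by (auto simp: g_def pf_def E2_def algebra_simps)
    qed
  qed
  also have "\<dots> = (\<Prod>k<n. pf \<delta> a eR pd k) * (\<Prod>k\<in>S. 1 + rr (p k) (T k) * (exp u - 1))"
    by (simp add: prod.distrib prod.If_cases SI1)
  finally show ?thesis .
qed


definition fewdel :: "nat \<Rightarrow> nat \<Rightarrow> nat \<Rightarrow> (bool \<times> bool) list \<Rightarrow> bool" where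
  "fewdel K0 w n cs \<longleftrightarrow> (\<forall>s. card {k. s \<le> k \<and> k < s + (3*w + K0 + 1) \<and> k < n \<and> snd (cs!k)} \<le> K0)"

definition typic :: "(nat \<Rightarrow> real) \<Rightarrow> nat \<Rightarrow> nat \<Rightarrow> nat \<Rightarrow> (bool \<times> bool) list \<Rightarrow> bool" where
  "typic p K0 w n cs \<longleftrightarrow> (\<forall>s. (\<Sum>k\<in>{k. s \<le> k \<and> k < s + (w + K0) \<and> k < n}. rr (p k) (fst (cs!k))) \<le> 3/8 * real (w + K0))"

lemma count_facts:
  assumes l: "length cs = n" and P: "P = filter (\<lambda>k. \<not> snd (cs!k)) [0..<n]"
  and i: "i + 3*w \<le> length P" and w: "0 < w" and fd: "fewdel K0 w n cs"
  shows "card {k. P!i \<le> k \<and> k < Suc (P!(i+3*w-1)) \<and> \<not> \<not> snd (cs!k)} \<le> K0"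
    "P!(i+w) \<le> P!i + (w + K0)" "Suc (P!(i+3*w-1)) \<le> P!(i+2*w) + (w + K0)"
    "Suc (P!(i+3*w-1)) - P!i \<le> 3*w + K0"
proof -
  define Q where "Q = (\<lambda>k. \<not> snd (cs!k))"
  have P2: "P = filter Q [0..<n]" using P by (simp add: Q_def)
  note sf = struct_facts[OF P2 i w]
  define a where "a = P!i"
  define bM where "bM = P!(i+w)"
  define bR where "bR = P!(i+2*w)"
  define eR where "eR = P!(i+3*w-1)"
  have ord: "a \<le> bM" "bM \<le> Suc eR" "bR \<le> Suc eR" "eR < n" using sf unfolding a_def bM_def bR_def eR_def by auto
  have c3: "card {k. a \<le> k \<and> k < Suc eR \<and> Q k} = 3*w"
    using sf(3) card_filter_upt[of a "Suc eR" Q] unfolding a_def eR_def by simp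
  have spl: "card {k. a \<le> k \<and> k < Suc eR \<and> Q k} + card {k. a \<le> k \<and> k < Suc eR \<and> \<not> Q k} = Suc eR - a"
    by (rule card_split_upt)
  have len: "Suc eR - a \<le> 3*w + K0"
  proof (rule ccontr)
    assume "\<not> Suc eR - a \<le> 3*w + K0"
    then have big: "a + (3*w + K0 + 1) \<le> Suc eR" by simp
    have "{k. a \<le> k \<and> k < a + (3*w + K0 + 1) \<and> \<not> Q k} = {k. a \<le> k \<and> k < a + (3*w + K0 + 1) \<and> k < n \<and> snd (cs!k)}"
      using big ord by (auto simp: Q_def)
    moreover have "card {k. a \<le> k \<and> k < a + (3*w + K0 + 1) \<and> k < n \<and> snd (cs!k)} \<le> K0"
      using fd unfolding fewdel_def by (rule spec)
    ultimately have s1: "card {k. a \<le> k \<and> k < a + (3*w + K0 + 1) \<and> \<not> Q k} \<le> K0"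
      by simp
    have "card {k. a \<le> k \<and> k < a + (3*w + K0 + 1) \<and> Q k} \<le> card {k. a \<le> k \<and> k < Suc eR \<and> Q k}"
      by (rule card_mono) (use big in auto)
    then have s2: "card {k. a \<le> k \<and> k < a + (3*w + K0 + 1) \<and> Q k} \<le> 3*w" using c3 by simp
    have "card {k. a \<le> k \<and> k < a + (3*w + K0 + 1) \<and> Q k} + card {k. a \<le> k \<and> k < a + (3*w + K0 + 1) \<and> \<not> Q k} = 3*w + K0 + 1"
      using card_split_upt[of a "a + (3*w + K0 + 1)" Q] by simp
    then show False using s1 s2 by simp
  qed
  have del: "card {k. a \<le> k \<and> k < Suc eR \<and> \<not> Q k} \<le> K0" using spl c3 len by simp
  then show "card {k. P!i \<le> k \<and> k < Suc (P!(i+3*w-1)) \<and> \<not> \<not> snd (cs!k)} \<le> K0"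
    unfolding a_def eR_def Q_def by simp
  show "Suc (P!(i+3*w-1)) - P!i \<le> 3*w + K0" using len unfolding a_def eR_def .
  have cL: "card {k. a \<le> k \<and> k < bM \<and> Q k} = w"
    using sf(1) card_filter_upt[of a bM Q] unfolding a_def bM_def by simp
  have "card {k. a \<le> k \<and> k < bM \<and> \<not> Q k} \<le> card {k. a \<le> k \<and> k < Suc eR \<and> \<not> Q k}"
    by (rule card_mono) (use ord in auto)
  then have "bM - a \<le> w + K0" using card_split_upt[of a bM Q] cL del by simp
  then show "P!(i+w) \<le> P!i + (w + K0)" unfolding a_def bM_def by simp
  have cR: "card {k. bR \<le> k \<and> k < Suc eR \<and> Q k} = w"
    using sf(2) card_filter_upt[of bR "Suc eR" Q] unfolding bR_def eR_def by simp
  have "a \<le> bR" using sf unfolding a_def bR_def by simp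
  then have "card {k. bR \<le> k \<and> k < Suc eR \<and> \<not> Q k} \<le> card {k. a \<le> k \<and> k < Suc eR \<and> \<not> Q k}"
    by (intro card_mono) auto
  then have "Suc eR - bR \<le> w + K0" using card_split_upt[of bR "Suc eR" Q] cR del by simp
  then show "Suc (P!(i+3*w-1)) \<le> P!(i+2*w) + (w + K0)" unfolding bR_def eR_def by simp
qed


lemma prod_pf_lower:
  assumes d01: "0 \<le> \<delta>" "\<delta> \<le> 1"
  and c1: "card {k. k < n \<and> a \<le> k \<and> k \<le> eR \<and> pd k} \<le> K"
  and c2: "card {k. k < n \<and> a \<le> k \<and> k \<le> eR \<and> \<not> pd k} \<le> N"
  shows "\<delta>^K * (1-\<delta>)^N \<le> (\<Prod>k<n. pf \<delta> a eR pd k)"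
proof -
  have "(\<Prod>k<n. pf \<delta> a eR pd k) = (\<Prod>k\<in>{..<n} \<inter> {k. a \<le> k \<and> k \<le> eR}. if pd k then \<delta> else 1 - \<delta>)"
    unfolding pf_def by (simp add: prod.If_cases)
  also have "\<dots> = \<delta> ^ card ({..<n} \<inter> {k. a \<le> k \<and> k \<le> eR} \<inter> {k. pd k}) * (1-\<delta>) ^ card ({..<n} \<inter> {k. a \<le> k \<and> k \<le> eR} \<inter> - {k. pd k})"
    by (simp add: prod.If_cases)
  also have "{..<n} \<inter> {k. a \<le> k \<and> k \<le> eR} \<inter> {k. pd k} = {k. k < n \<and> a \<le> k \<and> k \<le> eR \<and> pd k}" by auto
  also have "{..<n} \<inter> {k. a \<le> k \<and> k \<le> eR} \<inter> - {k. pd k} = {k. k < n \<and> a \<le> k \<and> k \<le> eR \<and> \<not> pd k}" by auto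
  finally have e: "(\<Prod>k<n. pf \<delta> a eR pd k) = \<delta> ^ card {k. k < n \<and> a \<le> k \<and> k \<le> eR \<and> pd k} * (1-\<delta>) ^ card {k. k < n \<and> a \<le> k \<and> k \<le> eR \<and> \<not> pd k}" .
  show ?thesis unfolding e
    by (intro mult_mono power_decreasing c1 c2) (use d01 in auto)
qed

lemma sum_rr_le:
  assumes p01: "\<And>k. k < n \<Longrightarrow> 0 \<le> p k \<and> p k \<le> 1"
  and S: "S \<subseteq> {k. s \<le> k \<and> k < s + (w + K0) \<and> k < n}" and ty: "typic p K0 w n cs"
  shows "(\<Sum>k\<in>S. rr (p k) (fst (cs!k))) \<le> 3/8 * real (w + K0)"
proof -
  have "(\<Sum>k\<in>S. rr (p k) (fst (cs!k))) \<le> (\<Sum>k\<in>{k. s \<le> k \<and> k < s + (w + K0) \<and> k < n}. rr (p k) (fst (cs!k)))"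
    by (rule sum_mono2) (use S p01 in \<open>auto simp: rr_def\<close>)
  also have "\<dots> \<le> 3/8 * real (w + K0)" using ty unfolding typic_def by blast
  finally show ?thesis .
qed

lemma prod_rr_exp:
  assumes p01: "\<And>k. k \<in> S \<Longrightarrow> 0 \<le> p k \<and> p k \<le> 1" and u: "0 \<le> u" and fin: "finite S"
  shows "(\<Prod>k\<in>S. 1 + rr (p k) (T k) * (exp u - 1)) \<le> exp ((exp u - 1) * (\<Sum>k\<in>S. rr (p k) (T k)))"
proof -
  have "(\<Prod>k\<in>S. 1 + rr (p k) (T k) * (exp u - 1)) \<le> (\<Prod>k\<in>S. exp (rr (p k) (T k) * (exp u - 1)))"
  proof (rule prod_mono)
    fix k assume k: "k \<in> S"
    have "0 \<le> rr (p k) (T k)" using p01[OF k] by (simp add: rr_def)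
    moreover have "0 \<le> exp u - 1" using u by simp
    ultimately have "0 \<le> rr (p k) (T k) * (exp u - 1)" by simp
    then show "0 \<le> 1 + rr (p k) (T k) * (exp u - 1) \<and> 1 + rr (p k) (T k) * (exp u - 1) \<le> exp (rr (p k) (T k) * (exp u - 1))"
      by (simp add: exp_ge_add_one_self add.commute)
  qed
  also have "\<dots> = exp ((exp u - 1) * (\<Sum>k\<in>S. rr (p k) (T k)))"
    using fin by (simp add: exp_sum sum_distrib_left mult.commute)
  finally show ?thesis .
qed

lemma G0_bound:
  assumes p01: "\<And>k. k < n \<Longrightarrow> 0 \<le> p k \<and> p k \<le> 1" and d01: "0 \<le> \<delta>" "\<delta> \<le> 1"
  and cs: "cs \<in> set_pmf (cfg \<delta> n p)" and fd: "fewdel K0 w n cs" and ty: "typic p K0 w n cs"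
  and i: "i + 3*w \<le> length (mk cs)" and nd: "\<not> deletion_free w (window w (mk cs) (i+w))"
  and w: "0 < w" and u: "0 \<le> u"
  shows "\<delta>^K0 * (1-\<delta>)^(3*w+K0) * (1 - 2 * exp (- u * (5 * real w / 12) + (exp u - 1) * (3/8 * real (w + K0))))
     \<le> measure_pmf.prob (trace_pmf \<delta> n p) {y. good w (mk cs) i y}"
proof -
  have l: "length cs = n" using cs by (rule cfg_length)
  define P where "P = filter (\<lambda>k. \<not> snd (cs!k)) [0..<n]"
  have mkP: "mk cs = map (\<lambda>k. (fst (cs!k), k)) P" using l by (simp add: mk_def P_def)
  have iP: "i + 3*w \<le> length P" using i mkP by simp
  define a where "a = P!i"
  define bM where "bM = P!(i+w)"
  define eM where "eM = P!(i+2*w-1)"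
  define bR where "bR = P!(i+2*w)"
  define eR where "eR = P!(i+3*w-1)"
  note sf = struct_facts[OF P_def iP w]
  note cf = count_facts[OF l P_def iP w fd]
  define pd where "pd = (\<lambda>k. snd (cs!k) \<and> \<not> (bM \<le> k \<and> k \<le> eM))"
  define T where "T = (\<lambda>k. fst (cs!k))"
  define SL where "SL = set (filter (\<lambda>k. \<not> snd (cs!k)) [a..<bM])"
  define SR where "SR = set (filter (\<lambda>k. \<not> snd (cs!k)) [bR..<Suc eR])"
  define \<theta> where "\<theta> = 5 * real w / 12"
  define pat where "pat = (\<lambda>c'::(bool\<times>bool) list. length c' = n \<and> (\<forall>k<n. a \<le> k \<and> k \<le> eR \<longrightarrow> snd (c'!k) = pd k))"
  define hamL where "hamL = (\<lambda>c'::(bool\<times>bool) list. real (card {k\<in>SL. T k \<noteq> fst (c'!k)}))"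
  define hamR where "hamR = (\<lambda>c'::(bool\<times>bool) list. real (card {k\<in>SR. T k \<noteq> fst (c'!k)}))"
  define \<epsilon> where "\<epsilon> = exp (- u * \<theta> + (exp u - 1) * (3/8 * real (w + K0)))"
  define Mp where "Mp = (\<Prod>k<n. pf \<delta> a eR pd k)"
  have ord: "a \<le> bM" "bM \<le> eM" "eM < bR" "bR \<le> eR" "eR < n"
    using sf unfolding a_def bM_def eM_def bR_def eR_def by auto
  have Mpat: "measure_pmf.prob (cfg \<delta> n p) {c'. pat c'} = Mp"
    unfolding pat_def Mp_def by (rule pat_prob[OF p01 d01])
  have Mp_low: "\<delta>^K0 * (1-\<delta>)^(3*w+K0) \<le> Mp"
    unfolding Mp_def
  proof (rule prod_pf_lower[OF d01])
    have "{k. k < n \<and> a \<le> k \<and> k \<le> eR \<and> pd k} \<subseteq> {k. P!i \<le> k \<and> k < Suc (P!(i+3*w-1)) \<and> \<not> \<not> snd (cs!k)}"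
      by (auto simp: pd_def a_def eR_def)
    then have "card {k. k < n \<and> a \<le> k \<and> k \<le> eR \<and> pd k} \<le> card {k. P!i \<le> k \<and> k < Suc (P!(i+3*w-1)) \<and> \<not> \<not> snd (cs!k)}"
      by (rule card_mono[rotated]) auto
    then show "card {k. k < n \<and> a \<le> k \<and> k \<le> eR \<and> pd k} \<le> K0" using cf(1) by simp
    have "{k. k < n \<and> a \<le> k \<and> k \<le> eR \<and> \<not> pd k} \<subseteq> {a..<Suc eR}" by auto
    then have "card {k. k < n \<and> a \<le> k \<and> k \<le> eR \<and> \<not> pd k} \<le> Suc eR - a"
      using card_mono[of "{a..<Suc eR}"] by fastforce
    then show "card {k. k < n \<and> a \<le> k \<and> k \<le> eR \<and> \<not> pd k} \<le> 3*w+K0"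
      using cf(4) unfolding a_def eR_def by simp
  qed
  have SLsub: "SL \<subseteq> {k. a \<le> k \<and> k \<le> eR \<and> k < n}" "\<forall>k\<in>SL. \<not> pd k"
    using ord by (auto simp: SL_def pd_def)
  have SRsub: "SR \<subseteq> {k. a \<le> k \<and> k \<le> eR \<and> k < n}" "\<forall>k\<in>SR. \<not> pd k"
    using ord by (auto simp: SR_def pd_def)
  have finSL: "finite SL" "finite SR" by (simp_all add: SL_def SR_def)
  have sumL: "(\<Sum>k\<in>SL. rr (p k) (T k)) \<le> 3/8 * real (w + K0)"
    unfolding T_def
  proof (rule sum_rr_le[OF p01 _ ty])
    show "SL \<subseteq> {k. a \<le> k \<and> k < a + (w + K0) \<and> k < n}"
      using cf(2) ord unfolding SL_def a_def bM_def by auto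
  qed
  have sumR: "(\<Sum>k\<in>SR. rr (p k) (T k)) \<le> 3/8 * real (w + K0)"
    unfolding T_def
  proof (rule sum_rr_le[OF p01 _ ty])
    show "SR \<subseteq> {k. bR \<le> k \<and> k < bR + (w + K0) \<and> k < n}"
      using cf(3) ord unfolding SR_def bR_def eR_def by auto
  qed
  have badgen: "measure_pmf.prob (cfg \<delta> n p) {c'. pat c' \<and> \<theta> \<le> real (card {k\<in>S. T k \<noteq> fst (c'!k)})} \<le> Mp * \<epsilon>"
    if S: "S \<subseteq> {k. a \<le> k \<and> k \<le> eR \<and> k < n}" "\<forall>k\<in>S. \<not> pd k" "finite S"
       and sS: "(\<Sum>k\<in>S. rr (p k) (T k)) \<le> 3/8 * real (w + K0)" for S
  proof -
    have h: "exp (u * \<theta>) * measure_pmf.prob (cfg \<delta> n p) {c'. pat c' \<and> \<theta> \<le> real (card {k\<in>S. T k \<noteq> fst (c'!k)})}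
        \<le> Mp * (\<Prod>k\<in>S. 1 + rr (p k) (T k) * (exp u - 1))"
      unfolding pat_def Mp_def using ham_prob[where \<theta>=\<theta> and T=T, OF p01 d01 u S(1) S(2)] by (simp add: conj_assoc)
    have "(\<Prod>k\<in>S. 1 + rr (p k) (T k) * (exp u - 1)) \<le> exp ((exp u - 1) * (\<Sum>k\<in>S. rr (p k) (T k)))"
      by (rule prod_rr_exp) (use S p01 u in auto)
    also have "\<dots> \<le> exp ((exp u - 1) * (3/8 * real (w + K0)))"
      using sS u by (intro exp_mono mult_left_mono) auto
    finally have h2: "(\<Prod>k\<in>S. 1 + rr (p k) (T k) * (exp u - 1)) \<le> exp ((exp u - 1) * (3/8 * real (w + K0)))" .
    have Mp0: "0 \<le> Mp" unfolding Mp_def pf_def using d01 by (auto intro!: prod_nonneg)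
    have "exp (u * \<theta>) * measure_pmf.prob (cfg \<delta> n p) {c'. pat c' \<and> \<theta> \<le> real (card {k\<in>S. T k \<noteq> fst (c'!k)})}
        \<le> Mp * exp ((exp u - 1) * (3/8 * real (w + K0)))"
      using h h2 Mp0 by (meson mult_left_mono order_trans)
    then have "measure_pmf.prob (cfg \<delta> n p) {c'. pat c' \<and> \<theta> \<le> real (card {k\<in>S. T k \<noteq> fst (c'!k)})}
        \<le> Mp * exp ((exp u - 1) * (3/8 * real (w + K0))) / exp (u * \<theta>)"
      by (simp add: field_simps)
    also have "\<dots> = Mp * \<epsilon>"
    proof -
      have "\<epsilon> = exp ((exp u - 1) * (3/8 * real (w + K0))) / exp (u * \<theta>)"
        unfolding \<epsilon>_def by (subst exp_diff[symmetric]) (rule arg_cong[where f=exp], simp)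
      then show ?thesis by simp
    qed
    finally show ?thesis .
  qed
  have bL: "measure_pmf.prob (cfg \<delta> n p) {c'. pat c' \<and> \<theta> \<le> hamL c'} \<le> Mp * \<epsilon>"
    unfolding hamL_def by (rule badgen) (use SLsub finSL sumL in auto)
  have bR': "measure_pmf.prob (cfg \<delta> n p) {c'. pat c' \<and> \<theta> \<le> hamR c'} \<le> Mp * \<epsilon>"
    unfolding hamR_def by (rule badgen) (use SRsub finSL sumR in auto)
  define G where "G = {c'. pat c' \<and> hamL c' \<le> \<theta> \<and> hamR c' \<le> \<theta>}"
  have split: "{c'. pat c'} \<subseteq> G \<union> {c'. pat c' \<and> \<theta> \<le> hamL c'} \<union> {c'. pat c' \<and> \<theta> \<le> hamR c'}"
    unfolding G_def by auto
  have "Mp \<le> measure_pmf.prob (cfg \<delta> n p) (G \<union> {c'. pat c' \<and> \<theta> \<le> hamL c'} \<union> {c'. pat c' \<and> \<theta> \<le> hamR c'})"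
    using Mpat split by (metis measure_pmf.finite_measure_mono sets_measure_pmf UNIV_I)
  also have "\<dots> \<le> measure_pmf.prob (cfg \<delta> n p) G + measure_pmf.prob (cfg \<delta> n p) {c'. pat c' \<and> \<theta> \<le> hamL c'}
                + measure_pmf.prob (cfg \<delta> n p) {c'. pat c' \<and> \<theta> \<le> hamR c'}"
    using measure_Un_le[of "G \<union> {c'. pat c' \<and> \<theta> \<le> hamL c'}" "measure_pmf (cfg \<delta> n p)" "{c'. pat c' \<and> \<theta> \<le> hamR c'}"]
      measure_Un_le[of G "measure_pmf (cfg \<delta> n p)" "{c'. pat c' \<and> \<theta> \<le> hamL c'}"] by simp
  finally have MG: "Mp * (1 - 2 * \<epsilon>) \<le> measure_pmf.prob (cfg \<delta> n p) G" using bL bR' by (simp add: algebra_simps)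
  have Gsub: "G \<subseteq> {c'. good w (mk cs) i (mk c')}"
  proof
    fix c' assume c': "c' \<in> G"
    then have pc: "pat c'" "hamL c' \<le> \<theta>" "hamR c' \<le> \<theta>" by (auto simp: G_def)
    have "\<exists>j j'. j + 2*w < j' \<and> j' + w \<le> length (mk c') \<and>
           matches w (window w (mk cs) i) (window w (mk c') j) \<and>
           matches w (window w (mk cs) (i+2*w)) (window w (mk c') j')"
    proof (rule core[OF l _ P_def iP w _ nd])
      show "length c' = n" using pc by (simp add: pat_def)
      show "\<forall>k. P!i \<le> k \<and> k \<le> P!(i+3*w-1) \<longrightarrow>
              (snd (c'!k) \<longleftrightarrow> snd (cs!k) \<and> \<not> (P!(i+w) \<le> k \<and> k \<le> P!(i+2*w-1)))"
        using pc(1) ord unfolding pat_def pd_def a_def eR_def bM_def eM_def by auto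
      show "real (card {k \<in> set (filter (\<lambda>k. \<not> snd (cs!k)) [P!i..<P!(i+w)]). fst (cs!k) \<noteq> fst (c'!k)}) \<le> 5 * real w / 12"
        using pc(2) unfolding hamL_def SL_def T_def \<theta>_def a_def bM_def .
      show "real (card {k \<in> set (filter (\<lambda>k. \<not> snd (cs!k)) [P!(i+2*w)..<Suc (P!(i+3*w-1))]). fst (cs!k) \<noteq> fst (c'!k)}) \<le> 5 * real w / 12"
        using pc(3) unfolding hamR_def SR_def T_def \<theta>_def bR_def eR_def .
    qed
    then show "c' \<in> {c'. good w (mk cs) i (mk c')}" by (simp add: good_def)
  qed
  have "measure_pmf.prob (cfg \<delta> n p) G \<le> measure_pmf.prob (trace_pmf \<delta> n p) {y. good w (mk cs) i y}"
    unfolding trace_eq measure_map_pmf using Gsub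
    by (intro measure_pmf.finite_measure_mono) auto
  then have main: "Mp * (1 - 2 * \<epsilon>) \<le> measure_pmf.prob (trace_pmf \<delta> n p) {y. good w (mk cs) i y}"
    using MG by linarith
  show ?thesis
  proof (cases "0 \<le> 1 - 2 * \<epsilon>")
    case True
    have "\<delta>^K0 * (1-\<delta>)^(3*w+K0) * (1 - 2 * \<epsilon>) \<le> Mp * (1 - 2 * \<epsilon>)"
      using Mp_low True by (rule mult_right_mono)
    then show ?thesis using main unfolding \<epsilon>_def \<theta>_def by simp
  next
    case False
    have "0 \<le> \<delta>^K0 * (1-\<delta>)^(3*w+K0)" using d01 by simp
    then have "\<delta>^K0 * (1-\<delta>)^(3*w+K0) * (1 - 2 * \<epsilon>) \<le> 0" using False by (simp add: mult_nonneg_nonpos)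
    then show ?thesis unfolding \<epsilon>_def \<theta>_def by (smt (verit) measure_nonneg)
  qed
qed


definition phi :: "real \<Rightarrow> real \<Rightarrow> real" where
  "phi v x = x * exp (v * (1 - x)) + (1 - x) * exp (v * x)"

lemma all_del_prob:
  assumes p01: "\<And>k. k < n \<Longrightarrow> 0 \<le> p k \<and> p k \<le> 1" and d01: "0 \<le> \<delta>" "\<delta> \<le> 1"
  and U: "U \<subseteq> {..<n}"
  shows "measure_pmf.prob (cfg \<delta> n p) {c. length c = n \<and> (\<forall>k\<in>U. snd (c!k))} = \<delta> ^ card U"
proof -
  define g where "g = (\<lambda>k (z::bool\<times>bool). if k \<in> U then (if snd z then 1 else 0) else (1::real))"
  have "measure_pmf.prob (cfg \<delta> n p) {c. length c = n \<and> (\<forall>k\<in>U. snd (c!k))} = (\<Prod>k<n. E2 (p k) \<delta> (g k))"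
  proof (rule cfg_measure_eq[OF p01 d01])
    show "\<And>k z. 0 \<le> g k z" by (simp add: g_def)
    fix c assume "c \<in> set_pmf (cfg \<delta> n p)"
    then have l: "length c = n" by (rule cfg_length)
    have "(\<Prod>k<n. g k (c!k)) = (if \<forall>k<n. k \<in> U \<longrightarrow> snd (c!k) then 1 else 0)"
      unfolding g_def by (rule prod_01_if)
    then show "indicator {c. length c = n \<and> (\<forall>k\<in>U. snd (c!k))} c = (\<Prod>k<n. g k (c!k))"
      using l U by (auto simp: indicator_def)
  qed
  also have "\<dots> = (\<Prod>k<n. if k \<in> U then \<delta> else 1)"
    by (intro prod.cong refl) (auto simp: g_def E2_def algebra_simps)
  also have "\<dots> = \<delta> ^ card U"
  proof -
    have "{..<n} \<inter> {k. k \<in> U} = U" using U by auto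
    then show ?thesis by (simp add: prod.If_cases)
  qed
  finally show ?thesis .
qed

lemma fewdel_fail:
  assumes p01: "\<And>k. k < n \<Longrightarrow> 0 \<le> p k \<and> p k \<le> 1" and d01: "0 \<le> \<delta>" "\<delta> \<le> 1"
  shows "measure_pmf.prob (cfg \<delta> n p) {c. \<not> fewdel K0 w n c}
     \<le> real n * (real ((3*w + K0 + 1) choose (K0 + 1)) * \<delta> ^ (K0 + 1))"
proof -
  define N where "N = 3*w + K0 + 1"
  define I where "I = (\<lambda>s. {k. s \<le> k \<and> k < s + N \<and> k < n})"
  define Fam where "Fam = (\<lambda>s. {U. U \<subseteq> I s \<and> card U = K0 + 1})"
  define A where "A = (\<lambda>U. {c::(bool\<times>bool) list. length c = n \<and> (\<forall>k\<in>U. snd (c!k))})"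
  have finI: "\<And>s. finite (I s)" by (simp add: I_def)
  have finF: "\<And>s. finite (Fam s)" unfolding Fam_def using finI by (simp add: finite_Collect_subsets)
  have cI: "\<And>s. card (I s) \<le> N"
  proof -
    fix s have "I s \<subseteq> {s..<s+N}" by (auto simp: I_def)
    then show "card (I s) \<le> N" using card_mono[of "{s..<s+N}" "I s"] by simp
  qed
  have sub: "{c. \<not> fewdel K0 w n c} \<inter> {c. length c = n} \<subseteq> (\<Union>s\<in>{..<n}. \<Union>U\<in>Fam s. A U)"
  proof
    fix c assume c: "c \<in> {c. \<not> fewdel K0 w n c} \<inter> {c. length c = n}"
    then obtain s where s: "\<not> card {k. s \<le> k \<and> k < s + N \<and> k < n \<and> snd (c!k)} \<le> K0"
      by (auto simp: fewdel_def N_def)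
    then have "K0 + 1 \<le> card {k. s \<le> k \<and> k < s + N \<and> k < n \<and> snd (c!k)}" by simp
    then obtain U where U: "U \<subseteq> {k. s \<le> k \<and> k < s + N \<and> k < n \<and> snd (c!k)}" "card U = K0 + 1"
      by (meson obtain_subset_with_card_n)
    have "s < n"
    proof (rule ccontr)
      assume "\<not> s < n"
      then have e: "{k. s \<le> k \<and> k < s + N \<and> k < n \<and> snd (c!k)} = {}" by auto
      show False using s unfolding e by simp
    qed
    moreover have "U \<in> Fam s" using U by (auto simp: Fam_def I_def)
    moreover have "c \<in> A U" using U c by (auto simp: A_def)
    ultimately show "c \<in> (\<Union>s\<in>{..<n}. \<Union>U\<in>Fam s. A U)" by blast
  qed
  have "measure_pmf.prob (cfg \<delta> n p) {c. \<not> fewdel K0 w n c}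
      = measure_pmf.prob (cfg \<delta> n p) ({c. \<not> fewdel K0 w n c} \<inter> {c. length c = n})"
    by (intro measure_pmf.finite_measure_eq_AE) (auto simp: AE_measure_pmf_iff dest: cfg_length)
  also have "\<dots> \<le> measure_pmf.prob (cfg \<delta> n p) (\<Union>s\<in>{..<n}. \<Union>U\<in>Fam s. A U)"
    using sub by (intro measure_pmf.finite_measure_mono) auto
  also have "\<dots> \<le> (\<Sum>s<n. measure_pmf.prob (cfg \<delta> n p) (\<Union>U\<in>Fam s. A U))"
    by (rule measure_UNION_le) auto
  also have "\<dots> \<le> (\<Sum>s<n. real (N choose (K0 + 1)) * \<delta> ^ (K0 + 1))"
  proof (rule sum_mono)
    fix s assume "s \<in> {..<n}"
    have "measure_pmf.prob (cfg \<delta> n p) (\<Union>U\<in>Fam s. A U) \<le> (\<Sum>U\<in>Fam s. measure_pmf.prob (cfg \<delta> n p) (A U))"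
      by (rule measure_UNION_le) (auto simp: finF)
    also have "\<dots> = (\<Sum>U\<in>Fam s. \<delta> ^ (K0 + 1))"
    proof (rule sum.cong[OF refl])
      fix U assume "U \<in> Fam s"
      then have "U \<subseteq> {..<n}" "card U = K0 + 1" by (auto simp: Fam_def I_def)
      then show "measure_pmf.prob (cfg \<delta> n p) (A U) = \<delta> ^ (K0 + 1)"
        unfolding A_def using all_del_prob[OF p01 d01] by simp
    qed
    also have "\<dots> = real (card (Fam s)) * \<delta> ^ (K0 + 1)" by simp
    also have "card (Fam s) = card (I s) choose (K0 + 1)"
      unfolding Fam_def by (rule n_subsets[OF finI])
    also have "real (card (I s) choose (K0 + 1)) * \<delta> ^ (K0 + 1) \<le> real (N choose (K0 + 1)) * \<delta> ^ (K0 + 1)"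
      using d01 cI[of s] by (intro mult_right_mono) (auto intro: binomial_right_mono)
    finally show "measure_pmf.prob (cfg \<delta> n p) (\<Union>U\<in>Fam s. A U) \<le> real (N choose (K0 + 1)) * \<delta> ^ (K0 + 1)" .
  qed
  also have "\<dots> = real n * (real (N choose (K0 + 1)) * \<delta> ^ (K0 + 1))" by simp
  finally show ?thesis unfolding N_def .
qed

lemma typic_fail:
  assumes p01: "\<And>k. k < n \<Longrightarrow> 0 \<le> p k \<and> p k \<le> 1" and d01: "0 \<le> \<delta>" "\<delta> \<le> 1" and v: "0 \<le> v"
  shows "measure_pmf.prob (cfg \<delta> n p) {c. \<not> typic p K0 w n c}
     \<le> (\<Sum>s<n. exp (- v * (3/8 * real (w + K0))) * (\<Prod>k\<in>{k. s \<le> k \<and> k < s + (w + K0) \<and> k < n}. phi v (p k)))"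
proof -
  define J where "J = (\<lambda>s. {k. s \<le> k \<and> k < s + (w + K0) \<and> k < n})"
  define \<theta> where "\<theta> = 3/8 * real (w + K0)"
  define B where "B = (\<lambda>s. {c::(bool\<times>bool) list. length c = n \<and> \<theta> < (\<Sum>k\<in>J s. rr (p k) (fst (c!k)))})"
  have sub: "{c. \<not> typic p K0 w n c} \<inter> {c. length c = n} \<subseteq> (\<Union>s\<in>{..<n}. B s)"
  proof
    fix c assume c: "c \<in> {c. \<not> typic p K0 w n c} \<inter> {c. length c = n}"
    then obtain s where s: "\<theta> < (\<Sum>k\<in>J s. rr (p k) (fst (c!k)))"
      by (auto simp: typic_def J_def \<theta>_def not_le)
    have "s < n"
    proof (rule ccontr)
      assume "\<not> s < n"
      then have "J s = {}" by (auto simp: J_def)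
      then show False using s by (simp add: \<theta>_def)
    qed
    then show "c \<in> (\<Union>s\<in>{..<n}. B s)" using s c by (auto simp: B_def)
  qed
  have "measure_pmf.prob (cfg \<delta> n p) {c. \<not> typic p K0 w n c}
      = measure_pmf.prob (cfg \<delta> n p) ({c. \<not> typic p K0 w n c} \<inter> {c. length c = n})"
    by (intro measure_pmf.finite_measure_eq_AE) (auto simp: AE_measure_pmf_iff dest: cfg_length)
  also have "\<dots> \<le> measure_pmf.prob (cfg \<delta> n p) (\<Union>s\<in>{..<n}. B s)"
    using sub by (intro measure_pmf.finite_measure_mono) auto
  also have "\<dots> \<le> (\<Sum>s<n. measure_pmf.prob (cfg \<delta> n p) (B s))"
    by (rule measure_UNION_le) auto
  also have "\<dots> \<le> (\<Sum>s<n. exp (- v * \<theta>) * (\<Prod>k\<in>J s. phi v (p k)))"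
  proof (rule sum_mono)
    fix s assume "s \<in> {..<n}"
    define g where "g = (\<lambda>k (z::bool\<times>bool). if k \<in> J s then exp (v * rr (p k) (fst z)) else 1)"
    have Jn: "J s \<subseteq> {..<n}" by (auto simp: J_def)
    have JI: "{..<n} \<inter> {k. k \<in> J s} = J s" "{..<n} \<inter> J s = J s" using Jn by auto
    have "exp (v * \<theta>) * measure_pmf.prob (cfg \<delta> n p) (B s) \<le> (\<Prod>k<n. E2 (p k) \<delta> (g k))"
    proof (rule cfg_measure_leL[OF p01 d01])
      show "\<And>k z. 0 \<le> g k z" by (simp add: g_def)
      show "0 \<le> exp (v * \<theta>)" by simp
      fix c assume c: "c \<in> B s"
      have "(\<Prod>k<n. g k (c!k)) = (\<Prod>k\<in>J s. exp (v * rr (p k) (fst (c!k))))"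
        unfolding g_def by (simp add: prod.If_cases JI)
      also have "\<dots> = exp (v * (\<Sum>k\<in>J s. rr (p k) (fst (c!k))))"
        by (simp add: exp_sum sum_distrib_left J_def)
      finally show "exp (v * \<theta>) \<le> (\<Prod>k<n. g k (c!k))"
        using c v by (auto simp: B_def intro!: mult_left_mono)
    qed
    also have "\<dots> = (\<Prod>k\<in>J s. phi v (p k))"
    proof -
      have "(\<Prod>k<n. E2 (p k) \<delta> (g k)) = (\<Prod>k<n. if k \<in> J s then phi v (p k) else 1)"
        by (intro prod.cong refl) (auto simp: g_def E2_def phi_def rr_def algebra_simps)
      then show ?thesis by (simp add: prod.If_cases JI)
    qed
    finally have "exp (v * \<theta>) * measure_pmf.prob (cfg \<delta> n p) (B s) \<le> (\<Prod>k\<in>J s. phi v (p k))" .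
    then show "measure_pmf.prob (cfg \<delta> n p) (B s) \<le> exp (- v * \<theta>) * (\<Prod>k\<in>J s. phi v (p k))"
      by (simp add: exp_minus field_simps)
  qed
  finally show ?thesis unfolding J_def \<theta>_def .
qed


abbreviation U01 :: "real measure" where "U01 \<equiv> uniform_measure lborel {0..1::real}"

lemma prob_U01: "prob_space U01"
  by (rule prob_space_uniform_measure) auto

lemma AE_U01: "AE x in U01. 0 \<le> x \<and> x \<le> 1"
  by (rule AE_uniform_measureI) auto

lemma phi_le:
  assumes "0 \<le> v" "v \<le> 1" "0 \<le> x" "x \<le> 1"
  shows "phi v x \<le> 1 + (2 * v + v^2) * (x * (1 - x))"
proof -
  have e1: "exp (v * (1 - x)) \<le> 1 + v * (1 - x) + (v * (1 - x))^2"
    by (rule exp_bound) (use assms in \<open>auto intro: mult_le_one\<close>)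
  have e2: "exp (v * x) \<le> 1 + v * x + (v * x)^2"
    by (rule exp_bound) (use assms in \<open>auto intro: mult_le_one\<close>)
  have "phi v x \<le> x * (1 + v * (1 - x) + (v * (1 - x))^2) + (1 - x) * (1 + v * x + (v * x)^2)"
    unfolding phi_def using assms by (intro add_mono mult_left_mono e1 e2) auto
  also have "\<dots> = 1 + (2 * v + v^2) * (x * (1 - x))" by (simp add: power2_eq_square algebra_simps)
  finally show ?thesis .
qed

lemma U01_density: "U01 = density lborel (\<lambda>x. ennreal (indicator {0..1} x))"
  by (simp add: uniform_measure_def ennreal_indicator divide_ennreal_def)

lemma integral_U01_poly: "(\<integral>x. 1 + c * (x * (1 - x)) \<partial>U01) = 1 + c / 6"
proof -
  have "(\<integral>x. 1 + c * (x * (1 - x)) \<partial>U01) = (\<integral>x. indicator {0..1} x *\<^sub>R (1 + c * (x * (1 - x))) \<partial>lborel)"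
    unfolding U01_density by (subst integral_density) auto
  also have "\<dots> = (\<lambda>x. x + c * (x^2/2 - x^3/3)) 1 - (\<lambda>x. x + c * (x^2/2 - x^3/3)) 0"
  proof (rule integral_FTC_atLeastAtMost)
    show "continuous_on {0..1} (\<lambda>x::real. 1 + c * (x * (1 - x)))" by (intro continuous_intros)
    fix x :: real
    show "((\<lambda>x. x + c * (x^2/2 - x^3/3)) has_vector_derivative 1 + c * (x * (1 - x))) (at x within {0..1})"
      unfolding has_real_derivative_iff_has_vector_derivative[symmetric]
      by (rule derivative_eq_intros refl | simp add: power2_eq_square algebra_simps)+
  qed simp
  also have "\<dots> = 1 + c / 6" by simp
  finally show ?thesis .
qed

lemma integrable_U01_bounded:
  fixes f :: "real \<Rightarrow> real"
  assumes "f \<in> borel_measurable borel" "\<And>x. 0 \<le> x \<Longrightarrow> x \<le> 1 \<Longrightarrow> \<bar>f x\<bar> \<le> B"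
  shows "integrable U01 f"
proof -
  interpret prob_space U01 by (rule prob_U01)
  show ?thesis
  proof (rule integrable_const_bound[where B=B])
    show "AE x in U01. norm (f x) \<le> B" using AE_U01 by eventually_elim (use assms in auto)
    show "f \<in> borel_measurable U01" using assms(1) by simp
  qed
qed

lemma phi_meas: "phi v \<in> borel_measurable borel"
  unfolding phi_def by measurable

lemma phi_bound:
  assumes "0 \<le> v" "v \<le> 1" "0 \<le> x" "x \<le> 1"
  shows "\<bar>phi v x\<bar> \<le> 3"
proof -
  have "exp (v * (1 - x)) \<le> exp 1" "exp (v * x) \<le> exp 1"
    using assms by (auto intro: mult_le_one)
  moreover have "exp (1::real) \<le> 3" using exp_le by simp
  ultimately have "exp (v * (1 - x)) \<le> 3" "exp (v * x) \<le> 3" by linarith+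
  then have "phi v x \<le> x * 3 + (1 - x) * 3"
    unfolding phi_def using assms by (intro add_mono mult_left_mono) auto
  moreover have "0 \<le> phi v x" unfolding phi_def using assms by simp
  ultimately show ?thesis by simp
qed

lemma integral_phi:
  assumes "0 \<le> v" "v \<le> 1"
  shows "(\<integral>x. phi v x \<partial>U01) \<le> 1 + (2 * v + v^2) / 6"
proof -
  have "(\<integral>x. phi v x \<partial>U01) \<le> (\<integral>x. 1 + (2 * v + v^2) * (x * (1 - x)) \<partial>U01)"
  proof (rule integral_mono_AE)
    show "integrable U01 (phi v)"
      by (rule integrable_U01_bounded[OF phi_meas]) (use phi_bound assms in auto)
    show "integrable U01 (\<lambda>x. 1 + (2 * v + v^2) * (x * (1 - x)))"
    proof (rule integrable_U01_bounded[where B="1 + (2 * v + v^2)"])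
      show "(\<lambda>x. 1 + (2 * v + v^2) * (x * (1 - x))) \<in> borel_measurable borel" by measurable
      fix x :: real assume x: "0 \<le> x" "x \<le> 1"
      have y: "0 \<le> x * (1 - x)" "x * (1 - x) \<le> 1" using x by (auto intro: mult_le_one)
      have c: "0 \<le> 2 * v + v^2" using assms by simp
      have "0 \<le> (2 * v + v^2) * (x * (1 - x))" using y c by simp
      moreover have "(2 * v + v^2) * (x * (1 - x)) \<le> 2 * v + v^2" using y c mult_left_le by blast
      ultimately show "\<bar>1 + (2 * v + v^2) * (x * (1 - x))\<bar> \<le> 1 + (2 * v + v^2)" by simp
    qed
    show "AE x in U01. phi v x \<le> 1 + (2 * v + v^2) * (x * (1 - x))"
      using AE_U01 by eventually_elim (use phi_le assms in auto)
  qed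
  also have "\<dots> = 1 + (2 * v + v^2) / 6" by (rule integral_U01_poly)
  finally show ?thesis .
qed

lemma S_measure_prob: "prob_space (S_measure n)"
  unfolding S_measure_def by (rule prob_space_PiM) (rule prob_U01)

lemma AE_S01: "AE p in S_measure n. \<forall>k<n. 0 \<le> p k \<and> p k \<le> 1"
proof -
  have "\<forall>k\<in>{..<n}. AE p in S_measure n. 0 \<le> p k \<and> p k \<le> 1"
    unfolding S_measure_def by (intro ballI AE_PiM_component prob_U01 AE_U01) auto
  then have "AE p in S_measure n. \<forall>k\<in>{..<n}. 0 \<le> p k \<and> p k \<le> 1"
    by (subst AE_finite_all) auto
  then show ?thesis by auto
qed

lemma integral_prod_phi:
  assumes v: "0 \<le> v" "v \<le> 1" and J: "J \<subseteq> {..<n}"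
  shows "(\<integral>p. (\<Prod>k\<in>J. phi v (p k)) \<partial>S_measure n) \<le> (1 + (2 * v + v^2) / 6) ^ card J"
proof -
  interpret product_prob_space "\<lambda>_. U01" "{..<n}"
    by (rule product_prob_spaceI) (rule prob_U01)
  have JI: "{..<n} \<inter> {k. k \<in> J} = J" "{..<n} \<inter> J = J" using J by auto
  define f where "f = (\<lambda>i. if i \<in> J then phi v else (\<lambda>_. 1::real))"
  have "(\<integral>p. (\<Prod>k\<in>J. phi v (p k)) \<partial>S_measure n) = (\<integral>p. (\<Prod>i\<in>{..<n}. f i (p i)) \<partial>S_measure n)"
    by (simp add: f_def prod.If_cases JI if_distrib[of "\<lambda>g. g _"] cong: if_cong)
  also have "\<dots> = (\<Prod>i\<in>{..<n}. integral\<^sup>L U01 (f i))"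
    unfolding S_measure_def
  proof (rule product_integral_prod)
    fix i show "integrable U01 (f i)"
      unfolding f_def
      by (cases "i \<in> J") (auto intro!: integrable_U01_bounded[where B=3] phi_meas phi_bound v)
  qed simp
  also have "\<dots> = (\<Prod>i\<in>J. \<integral>x. phi v x \<partial>U01)"
  proof -
    have "(\<Prod>i\<in>{..<n}. integral\<^sup>L U01 (f i)) = (\<Prod>i\<in>{..<n}. if i \<in> J then (\<integral>x. phi v x \<partial>U01) else 1)"
      by (rule prod.cong) (auto simp: f_def prob_space.prob_space[OF prob_U01])
    then show ?thesis by (simp add: prod.If_cases JI)
  qed
  also have "\<dots> \<le> (\<Prod>i\<in>J. 1 + (2 * v + v^2) / 6)"
  proof (rule prod_mono)
    fix i assume "i \<in> J"
    have "0 \<le> (\<integral>x. phi v x \<partial>U01)"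
      by (rule integral_nonneg_AE) (use AE_U01 in \<open>eventually_elim, simp add: phi_def\<close>)
    then show "0 \<le> (\<integral>x. phi v x \<partial>U01) \<and> (\<integral>x. phi v x \<partial>U01) \<le> 1 + (2 * v + v^2) / 6"
      using integral_phi[OF v] by simp
  qed
  also have "\<dots> = (1 + (2 * v + v^2) / 6) ^ card J" by simp
  finally show ?thesis .
qed


definition MPF :: "'b measure \<Rightarrow> ('b \<Rightarrow> 'a pmf) \<Rightarrow> bool" where
  "MPF M Q \<longleftrightarrow> (\<exists>Z. finite Z \<and> (\<forall>p. set_pmf (Q p) \<subseteq> Z)) \<and> (\<forall>z. (\<lambda>p. pmf (Q p) z) \<in> borel_measurable M)"

lemma MPF_const: "finite (set_pmf q) \<Longrightarrow> MPF M (\<lambda>p. q)"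
  unfolding MPF_def by auto

lemma MPF_return: "MPF M (\<lambda>p. return_pmf x)"
  by (rule MPF_const) simp

lemma MPF_bind:
  assumes Q: "MPF M Q" and F: "\<And>a. MPF M (\<lambda>p. F p a)"
  shows "MPF M (\<lambda>p. bind_pmf (Q p) (F p))"
proof -
  obtain Z where Z: "finite Z" "\<And>p. set_pmf (Q p) \<subseteq> Z" using Q unfolding MPF_def by blast
  have "\<forall>a. \<exists>Z. finite Z \<and> (\<forall>p. set_pmf (F p a) \<subseteq> Z)" using F unfolding MPF_def by blast
  then obtain g where g: "\<And>a. finite (g a)" "\<And>a p. set_pmf (F p a) \<subseteq> g a" by metis
  have fin: "finite (\<Union>a\<in>Z. g a)" using Z g by auto
  have supp: "\<And>p. set_pmf (bind_pmf (Q p) (F p)) \<subseteq> (\<Union>a\<in>Z. g a)" using Z g by fastforce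
  have pm: "\<And>p z. pmf (bind_pmf (Q p) (F p)) z = (\<Sum>a\<in>Z. pmf (Q p) a * pmf (F p a) z)"
  proof -
    fix p z
    have "pmf (bind_pmf (Q p) (F p)) z = (\<integral>a. pmf (F p a) z \<partial>Q p)" by (rule pmf_bind)
    also have "\<dots> = (\<Sum>a\<in>Z. pmf (Q p) a *\<^sub>R pmf (F p a) z)"
      by (rule integral_measure_pmf[OF Z(1)]) (use Z(2) in auto)
    finally show "pmf (bind_pmf (Q p) (F p)) z = (\<Sum>a\<in>Z. pmf (Q p) a * pmf (F p a) z)" by simp
  qed
  have "\<And>z. (\<lambda>p. pmf (bind_pmf (Q p) (F p)) z) \<in> borel_measurable M"
  proof -
    fix z
    have m1: "\<And>a. (\<lambda>p. pmf (Q p) a) \<in> borel_measurable M" using Q unfolding MPF_def by blast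
    have m2: "\<And>a. (\<lambda>p. pmf (F p a) z) \<in> borel_measurable M" using F unfolding MPF_def by blast
    show "(\<lambda>p. pmf (bind_pmf (Q p) (F p)) z) \<in> borel_measurable M"
      unfolding pm using m1 m2 by (intro borel_measurable_sum borel_measurable_times) auto
  qed
  then show ?thesis unfolding MPF_def using fin supp by blast
qed

lemma MPF_map: "MPF M Q \<Longrightarrow> MPF M (\<lambda>p. map_pmf f (Q p))"
  unfolding map_pmf_def by (rule MPF_bind) (auto intro: MPF_return)

lemma MPF_pair: "MPF M A \<Longrightarrow> MPF M B \<Longrightarrow> MPF M (\<lambda>p. pair_pmf (A p) (B p))"
  unfolding pair_pmf_def by (intro MPF_bind MPF_return)

lemma MPF_list: "(\<And>q. q \<in> set qs \<Longrightarrow> MPF M q) \<Longrightarrow> MPF M (\<lambda>p. list_pmf (map (\<lambda>q. q p) qs))"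
proof (induction qs)
  case Nil then show ?case by (simp add: MPF_return)
next
  case (Cons q qs)
  show ?case by (simp, intro MPF_bind MPF_return Cons.IH Cons.prems) auto
qed

context
begin
interpretation pmf_as_function .

lemma pmf_bernoulli_general: "pmf (bernoulli_pmf x) b = (if b then min 1 (max 0 x) else 1 - min 1 (max 0 x))"
  by transfer simp

end

lemma MPF_bernoulli:
  assumes "f \<in> borel_measurable M"
  shows "MPF M (\<lambda>p. bernoulli_pmf (f p))"
proof -
  have "\<And>b. (\<lambda>p. pmf (bernoulli_pmf (f p)) b) \<in> borel_measurable M"
    unfolding pmf_bernoulli_general using assms by measurable
  moreover have "\<forall>p. set_pmf (bernoulli_pmf (f p)) \<subseteq> UNIV" by simp
  ultimately show ?thesis unfolding MPF_def by (metis finite_UNIV finite_code)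
qed

lemma MPF_prob_measurable:
  assumes "MPF M Q"
  shows "(\<lambda>p. measure_pmf.prob (Q p) A) \<in> borel_measurable M"
proof -
  obtain Z where Z: "finite Z" "\<And>p. set_pmf (Q p) \<subseteq> Z" using assms unfolding MPF_def by blast
  have e: "\<And>p. measure_pmf.prob (Q p) A = (\<Sum>z\<in>A \<inter> Z. pmf (Q p) z)"
  proof -
    fix p
    have "measure_pmf.prob (Q p) A = measure_pmf.prob (Q p) (A \<inter> Z)"
      by (rule measure_pmf.finite_measure_eq_AE) (use Z(2) in \<open>auto simp: AE_measure_pmf_iff\<close>)
    also have "\<dots> = (\<Sum>z\<in>A \<inter> Z. pmf (Q p) z)" by (rule measure_measure_pmf_finite) (use Z in auto)
    finally show "measure_pmf.prob (Q p) A = (\<Sum>z\<in>A \<inter> Z. pmf (Q p) z)" .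
  qed
  show ?thesis unfolding e using assms unfolding MPF_def by (intro borel_measurable_sum) auto
qed

lemma integrand_measurable:
  "(\<lambda>p. measure_pmf.prob (algo_experiment \<delta> n m p) A) \<in> borel_measurable (S_measure n)"
proof (rule MPF_prob_measurable)
  have tr: "MPF (S_measure n) (\<lambda>p. trace_pmf \<delta> n p)"
  proof -
    have "MPF (S_measure n) (\<lambda>p. list_pmf (map (\<lambda>q. q p) (map (\<lambda>k p. pos_pmf \<delta> p k) [0..<n])))"
    proof (rule MPF_list)
      fix q assume "q \<in> set (map (\<lambda>k p. pos_pmf \<delta> p k) [0..<n])"
      then obtain k where k: "k < n" "q = (\<lambda>p. pos_pmf \<delta> p k)" by auto
      have kn: "k \<in> {..<n}" using k by simp
      have "(\<lambda>p. p k) \<in> borel_measurable (S_measure n)"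
        unfolding S_measure_def using kn by measurable
      then show "MPF (S_measure n) q" unfolding k pos_pmf_def
        by (intro MPF_bind MPF_bernoulli MPF_return MPF_const) auto
    qed
    then show ?thesis unfolding trace_pmf_def by (simp add: comp_def MPF_map)
  qed
  have fs: "finite (set_pmf (pmf_of_set {0..n - 3 * win_len m}))" by simp
  show "MPF (S_measure n) (algo_experiment \<delta> n m)"
    unfolding algo_experiment_def
  proof (intro MPF_bind MPF_return)
    show "MPF (S_measure n) (\<lambda>p. list_pmf (replicate (m^2) (pair_pmf (trace_pmf \<delta> n p) (pmf_of_set {0..n - 3 * win_len m}))))"
      using MPF_list[of "replicate (m^2) (\<lambda>p. pair_pmf (trace_pmf \<delta> n p) (pmf_of_set {0..n - 3 * win_len m}))" "S_measure n"]
        MPF_pair[OF tr MPF_const[OF fs]] by simp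
    show "\<And>XI. MPF (S_measure n) (\<lambda>p. list_pmf (replicate (m^25) (trace_pmf \<delta> n p)))"
      using MPF_list[of "replicate (m^25) (\<lambda>p. trace_pmf \<delta> n p)" "S_measure n"] tr by simp
  qed
qed


lemma pointwise:
  fixes m n :: nat and \<delta> u v :: real
  assumes p01: "\<And>k. k < n \<Longrightarrow> 0 \<le> p k \<and> p k \<le> 1" and d01: "0 \<le> \<delta>" "\<delta> \<le> 1"
  and w: "w = win_len m" "0 < w" and u: "0 \<le> u" and v: "0 \<le> v"
  and G0: "G0 = \<delta>^K0 * (1-\<delta>)^(3*w+K0) * (1 - 2 * exp (- u * (5 * real w / 12) + (exp u - 1) * (3/8 * real (w + K0))))"
  and G01: "G0 \<le> 1"
  shows "1 - measure_pmf.prob (algo_experiment \<delta> n m p) {(XI, Y). all_chunks_deletion_free (win_len m) XI Y}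
     \<le> real (m^2) * ((1 - G0)^(m^25) + real n * (real ((3*w + K0 + 1) choose (K0 + 1)) * \<delta> ^ (K0 + 1))
         + (\<Sum>s<n. exp (- v * (3/8 * real (w + K0))) * (\<Prod>k\<in>{k. s \<le> k \<and> k < s + (w + K0) \<and> k < n}. phi v (p k))))"
proof -
  define nice where "nice = (\<lambda>cs. fewdel K0 w n cs \<and> typic p K0 w n cs)"
  have compl: "measure_pmf.prob (algo_experiment \<delta> n m p) {(XI, Y). all_chunks_deletion_free w XI Y}
      = 1 - measure_pmf.prob (algo_experiment \<delta> n m p) {(XI, Y). \<not> all_chunks_deletion_free w XI Y}"
  proof -
    have "{(XI, Y). \<not> all_chunks_deletion_free w XI Y} = space (measure_pmf (algo_experiment \<delta> n m p)) - {(XI, Y). all_chunks_deletion_free w XI Y}"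
      by auto
    then show ?thesis using measure_pmf.prob_compl[of "{(XI, Y). all_chunks_deletion_free w XI Y}" "algo_experiment \<delta> n m p"] by simp
  qed
  have pp: "measure_pmf.prob (algo_experiment \<delta> n m p) {(XI, Y). \<not> all_chunks_deletion_free w XI Y}
      \<le> real (m^2) * ((1 - G0)^(m^25) + measure_pmf.prob (cfg \<delta> n p) {cs. \<not> nice cs})"
    unfolding algo_experiment_def w(1)[symmetric]
  proof (rule per_p[OF G01])
    fix cs i assume cs: "cs \<in> set_pmf (cfg \<delta> n p)" and ni: "nice cs" and i: "i + 3*w \<le> length (mk cs)"
      and nd: "\<not> deletion_free w (window w (mk cs) (i+w))"
    show "G0 \<le> measure_pmf.prob (trace_pmf \<delta> n p) {y. good w (mk cs) i y}"
      unfolding G0 using G0_bound[OF p01 d01 cs _ _ i nd w(2) u] ni by (simp add: nice_def)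
  qed
  have "measure_pmf.prob (cfg \<delta> n p) {cs. \<not> nice cs}
      \<le> measure_pmf.prob (cfg \<delta> n p) {cs. \<not> fewdel K0 w n cs} + measure_pmf.prob (cfg \<delta> n p) {cs. \<not> typic p K0 w n cs}"
  proof -
    have "{cs. \<not> nice cs} = {cs. \<not> fewdel K0 w n cs} \<union> {cs. \<not> typic p K0 w n cs}" by (auto simp: nice_def)
    then show ?thesis using measure_Un_le[of "{cs. \<not> fewdel K0 w n cs}" "measure_pmf (cfg \<delta> n p)" "{cs. \<not> typic p K0 w n cs}"] by simp
  qed
  also have "\<dots> \<le> real n * (real ((3*w + K0 + 1) choose (K0 + 1)) * \<delta> ^ (K0 + 1))
         + (\<Sum>s<n. exp (- v * (3/8 * real (w + K0))) * (\<Prod>k\<in>{k. s \<le> k \<and> k < s + (w + K0) \<and> k < n}. phi v (p k)))"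
    by (intro add_mono fewdel_fail[OF p01 d01] typic_fail[OF p01 d01 v])
  finally have np: "measure_pmf.prob (cfg \<delta> n p) {cs. \<not> nice cs} \<le> \<dots>" .
  have "1 - measure_pmf.prob (algo_experiment \<delta> n m p) {(XI, Y). all_chunks_deletion_free w XI Y}
     \<le> real (m^2) * ((1 - G0)^(m^25) + measure_pmf.prob (cfg \<delta> n p) {cs. \<not> nice cs})"
    using compl pp by simp
  also have "\<dots> \<le> real (m^2) * ((1 - G0)^(m^25) + (real n * (real ((3*w + K0 + 1) choose (K0 + 1)) * \<delta> ^ (K0 + 1))
         + (\<Sum>s<n. exp (- v * (3/8 * real (w + K0))) * (\<Prod>k\<in>{k. s \<le> k \<and> k < s + (w + K0) \<and> k < n}. phi v (p k)))))"
    using np by (intro mult_left_mono add_left_mono) auto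
  finally show ?thesis unfolding w(1)[symmetric] by (simp add: add.assoc)
qed


lemma integrable_prod_phi:
  assumes v: "0 \<le> v" "v \<le> 1" and J: "J \<subseteq> {..<n}"
  shows "integrable (S_measure n) (\<lambda>p. \<Prod>k\<in>J. phi v (p k))"
proof -
  interpret prob_space "S_measure n" by (rule S_measure_prob)
  show ?thesis
  proof (rule integrable_const_bound[where B="3 ^ card J"])
    show "AE p in S_measure n. norm (\<Prod>k\<in>J. phi v (p k)) \<le> 3 ^ card J"
      using AE_S01[of n]
    proof eventually_elim
      case (elim p)
      have "norm (\<Prod>k\<in>J. phi v (p k)) = (\<Prod>k\<in>J. \<bar>phi v (p k)\<bar>)" by (simp add: abs_prod)
      also have "\<dots> \<le> (\<Prod>k\<in>J. 3)" by (rule prod_mono) (use elim J v phi_bound in auto)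
      finally show ?case by simp
    qed
    have "\<And>k. k \<in> J \<Longrightarrow> (\<lambda>p. phi v (p k)) \<in> borel_measurable (S_measure n)"
    proof -
      fix k assume "k \<in> J" then have kn: "k \<in> {..<n}" using J by auto
      have "(\<lambda>p. p k) \<in> borel_measurable (S_measure n)" unfolding S_measure_def using kn by measurable
      then show "(\<lambda>p. phi v (p k)) \<in> borel_measurable (S_measure n)"
        using measurable_compose[OF _ phi_meas] by blast
    qed
    then show "(\<lambda>p. \<Prod>k\<in>J. phi v (p k)) \<in> borel_measurable (S_measure n)"
      by (intro borel_measurable_prod) auto
  qed
qed

lemma integrated:
  fixes m n :: nat and \<delta> u v :: real
  assumes d01: "0 \<le> \<delta>" "\<delta> \<le> 1"
  and w: "w = win_len m" "0 < w" and u: "0 \<le> u" and v: "0 \<le> v" "v \<le> 1"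
  and G0: "G0 = \<delta>^K0 * (1-\<delta>)^(3*w+K0) * (1 - 2 * exp (- u * (5 * real w / 12) + (exp u - 1) * (3/8 * real (w + K0))))"
  and G01: "G0 \<le> 1"
  shows "1 - real (m^2) * ((1 - G0)^(m^25) + real n * (real ((3*w + K0 + 1) choose (K0 + 1)) * \<delta> ^ (K0 + 1))
         + real n * (exp (- v * (3/8 * real (w + K0))) * (1 + (2 * v + v^2) / 6) ^ (w + K0)))
     \<le> (\<integral>p. measure_pmf.prob (algo_experiment \<delta> n m p) {(XI, Y). all_chunks_deletion_free (win_len m) XI Y} \<partial>S_measure n)"
proof -
  interpret prob_space "S_measure n" by (rule S_measure_prob)
  define F where "F = (\<lambda>p. measure_pmf.prob (algo_experiment \<delta> n m p) {(XI, Y). all_chunks_deletion_free (win_len m) XI Y})"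
  define J where "J = (\<lambda>s. {k. s \<le> k \<and> k < s + (w + K0) \<and> k < n})"
  define e where "e = exp (- v * (3/8 * real (w + K0)))"
  define A where "A = (1 - G0)^(m^25) + real n * (real ((3*w + K0 + 1) choose (K0 + 1)) * \<delta> ^ (K0 + 1))"
  define R where "R = (\<lambda>p. real (m^2) * (A + (\<Sum>s<n. e * (\<Prod>k\<in>J s. phi v (p k)))))"
  have Jn: "\<And>s. J s \<subseteq> {..<n}" by (auto simp: J_def)
  have intP: "\<And>s. integrable (S_measure n) (\<lambda>p. \<Prod>k\<in>J s. phi v (p k))"
    by (rule integrable_prod_phi[OF v Jn])
  have intR: "integrable (S_measure n) R" unfolding R_def using intP by auto
  have intF: "integrable (S_measure n) F"
  proof (rule integrable_const_bound[where B=1])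
    show "AE p in S_measure n. norm (F p) \<le> 1" by (auto simp: F_def)
    show "F \<in> borel_measurable (S_measure n)" unfolding F_def by (rule integrand_measurable)
  qed
  have AEb: "AE p in S_measure n. 1 - R p \<le> F p"
    using AE_S01[of n]
  proof eventually_elim
    case (elim p)
    have "1 - F p \<le> R p"
      unfolding F_def R_def A_def e_def J_def
      using pointwise[where p=p, OF _ d01 w u v(1) G0 G01] elim by (simp add: add.assoc sum_distrib_left)
    then show ?case by simp
  qed
  have "(\<integral>p. 1 - R p \<partial>S_measure n) \<le> (\<integral>p. F p \<partial>S_measure n)"
    by (rule integral_mono_AE[OF _ intF AEb]) (use intR in auto)
  moreover have "(\<integral>p. 1 - R p \<partial>S_measure n) = 1 - (\<integral>p. R p \<partial>S_measure n)"
    using intR by (simp add: prob_space)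
  moreover have "(\<integral>p. R p \<partial>S_measure n) \<le> real (m^2) * (A + real n * (e * (1 + (2 * v + v^2) / 6) ^ (w + K0)))"
  proof -
    have "(\<integral>p. R p \<partial>S_measure n) = real (m^2) * (A + (\<Sum>s<n. e * (\<integral>p. (\<Prod>k\<in>J s. phi v (p k)) \<partial>S_measure n)))"
      unfolding R_def using intP by (simp add: prob_space integral_sum)
    also have "\<dots> \<le> real (m^2) * (A + (\<Sum>s<n. e * (1 + (2 * v + v^2) / 6) ^ (w + K0)))"
    proof -
      have sb: "(\<Sum>s<n. e * (\<integral>p. (\<Prod>k\<in>J s. phi v (p k)) \<partial>S_measure n)) \<le> (\<Sum>s<n. e * (1 + (2 * v + v^2) / 6) ^ (w + K0))"
      proof (rule sum_mono)
      fix s assume "s \<in> {..<n}"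
      have "(\<integral>p. (\<Prod>k\<in>J s. phi v (p k)) \<partial>S_measure n) \<le> (1 + (2 * v + v^2) / 6) ^ card (J s)"
        by (rule integral_prod_phi[OF v Jn])
      also have "\<dots> \<le> (1 + (2 * v + v^2) / 6) ^ (w + K0)"
      proof (rule power_increasing)
        have "J s \<subseteq> {s..<s + (w + K0)}" by (auto simp: J_def)
        then show "card (J s) \<le> w + K0" using card_mono[of "{s..<s + (w + K0)}" "J s"] by simp
        show "1 \<le> 1 + (2 * v + v^2) / 6" using v by simp
      qed
      finally show "e * (\<integral>p. (\<Prod>k\<in>J s. phi v (p k)) \<partial>S_measure n) \<le> e * (1 + (2 * v + v^2) / 6) ^ (w + K0)"
        by (intro mult_left_mono) (auto simp: e_def)
      qed
      then show ?thesis by (intro mult_left_mono add_left_mono) auto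
    qed
    also have "\<dots> = real (m^2) * (A + real n * (e * (1 + (2 * v + v^2) / 6) ^ (w + K0)))" by simp
    finally show ?thesis .
  qed
  ultimately show ?thesis unfolding F_def A_def e_def by (simp add: add.assoc)
qed


lemma exp14: "exp (14::real) \<le> 10^7"
proof -
  have "exp (14::real) = exp 1 ^ 14" by (simp add: exp_of_nat_mult[symmetric])
  also have "\<dots> \<le> 3 ^ 14" by (rule power_mono) (use exp_le in auto)
  finally show ?thesis by simp
qed

lemma exp10: "(13000::real) \<le> exp 10"
proof -
  have a: "(1 + 10 / real 100) ^ 100 \<le> exp (10::real)"
    by (rule exp_ge_one_plus_x_over_n_power_n) auto
  have b: "(13000::real) \<le> (1 + 10 / real 100) ^ 100" by (simp add: power_divide)
  show ?thesis by (rule order_trans[OF b a])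
qed

lemma L_ge:
  fixes \<delta> :: real
  assumes "0 < \<delta>" "\<delta> < 1 / 10^7"
  shows "14 \<le> - ln \<delta>"
proof -
  have "ln \<delta> \<le> ln (1/10^7)" using assms by simp
  also have "ln (1/10^7) = - ln (10^7::real)" by (simp add: ln_div)
  also have "ln (10^7::real) \<ge> 14"
  proof -
    have "ln (exp 14) \<le> ln (10^7::real)" by (subst ln_le_cancel_iff) (use exp14 in auto)
    then show ?thesis by simp
  qed
  then have "- ln (10^7::real) \<le> -14" by simp
  finally show ?thesis by simp
qed

lemma K0_facts:
  assumes d: "0 < \<delta>" "\<delta> < 1 / 10^7" and l: "0 \<le> l"
  defines "K0 \<equiv> nat \<lfloor>24 * l / (- ln \<delta>)\<rfloor>"
  shows "real K0 \<le> 24 * l / 14" "exp (- 24 * l) \<le> \<delta> ^ K0" "\<delta> ^ (K0 + 1) \<le> exp (- 24 * l)"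
proof -
  define L where "L = - ln \<delta>"
  have L: "14 \<le> L" using L_ge[OF d] by (simp add: L_def)
  have q0: "0 \<le> 24 * l / L" using l L by simp
  have K0r: "real K0 = of_int \<lfloor>24 * l / L\<rfloor>" unfolding K0_def L_def using q0 L_def by simp
  have K1: "real K0 \<le> 24 * l / L" using K0r by simp
  have K2: "24 * l / L < real K0 + 1" using K0r by linarith
  have "24 * l / L \<le> 24 * l / 14" by (rule divide_left_mono) (use L l in auto)
  then show "real K0 \<le> 24 * l / 14" using K1 by linarith
  have dK: "\<delta> ^ K = exp (- (real K * L))" for K
  proof -
    have "exp (real K * ln \<delta>) = exp (ln \<delta>) ^ K" by (rule exp_of_nat_mult)
    then show ?thesis using d by (simp add: L_def)
  qed
  have "real K0 * L \<le> 24 * l" using K1 L by (simp add: field_simps)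
  then show "exp (- 24 * l) \<le> \<delta> ^ K0" unfolding dK by simp
  have "24 * l \<le> real (K0 + 1) * L" using K2 L by (simp add: field_simps)
  then show "\<delta> ^ (K0 + 1) \<le> exp (- 24 * l)" unfolding dK by simp
qed


lemma exp_pow: "exp (x::real) ^ k = exp (real k * x)"
  by (simp add: exp_of_nat_mult)

lemma one_plus_pow_le: "0 \<le> (x::real) \<Longrightarrow> (1 + x) ^ k \<le> exp (real k * x)"
proof -
  assume x: "0 \<le> x"
  have "(1 + x) ^ k \<le> exp x ^ k" by (rule power_mono) (use x in \<open>auto simp: add.commute\<close>)
  then show ?thesis by (simp add: exp_pow)
qed

lemma term3:
  fixes l :: real and m n w K0 :: nat
  assumes l: "100 \<le> l" and m: "real m = exp l" and n: "n \<le> m" and w: "10000 * l \<le> real w"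
  shows "real (m^2) * (real n * (exp (- (1/8) * (3/8 * real (w + K0))) * (1 + (2 * (1/8) + (1/8)^2) / 6) ^ (w + K0)))
     \<le> exp (- l)"
proof -
  define N where "N = w + K0"
  have N: "10000 * l \<le> real N" using w by (simp add: N_def)
  have "(1 + (2 * (1/8) + (1/8)^2) / (6::real)) ^ N \<le> exp (real N * ((2 * (1/8) + (1/8)^2) / 6))"
    by (rule one_plus_pow_le) simp
  then have a0: "exp (- (1/8) * (3/8 * real N)) * (1 + (2 * (1/8) + (1/8)^2) / 6) ^ N
      \<le> exp (- (1/8) * (3/8 * real N)) * exp (real N * ((2 * (1/8) + (1/8)^2) / 6))"
    by (rule mult_left_mono) simp
  have ar: "- (1/8) * (3/8 * real N) + real N * ((2 * (1/8) + (1/8)^2) / 6) = - real N / 384"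
    by (simp add: field_simps power2_eq_square)
  have a: "exp (- (1/8) * (3/8 * real N)) * (1 + (2 * (1/8) + (1/8)^2) / 6) ^ N \<le> exp (- real N / 384)"
    using a0 unfolding exp_add[symmetric] ar .
  have mn: "real (m^2) * real n \<le> exp (3 * l)"
  proof -
    have "real (m^2) * real n \<le> real m ^ 2 * real m" using n by (simp add: mult_left_mono)
    also have "\<dots> = exp (3 * l)" using m by (simp add: exp_pow[symmetric] power_Suc[symmetric] power2_eq_square exp_add[symmetric])
    finally show ?thesis .
  qed
  have "real (m^2) * (real n * (exp (- (1/8) * (3/8 * real N)) * (1 + (2 * (1/8) + (1/8)^2) / 6) ^ N))
      \<le> exp (3 * l) * exp (- real N / 384)"
  proof -
    define X where "X = exp (- (1/8) * (3/8 * real N)) * (1 + (2 * (1/8) + (1/8)^2) / (6::real)) ^ N"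
    have X0: "0 \<le> X" unfolding X_def by simp
    have "real (m^2) * (real n * X) = (real (m^2) * real n) * X" by (simp add: mult.assoc)
    also have "\<dots> \<le> exp (3 * l) * exp (- real N / 384)"
      using mn a X0 unfolding X_def by (intro mult_mono) auto
    finally show ?thesis unfolding X_def .
  qed
  also have "\<dots> = exp (3 * l - real N / 384)" by (simp add: exp_add[symmetric])
  also have "\<dots> \<le> exp (- l)" using N l by simp
  finally show ?thesis unfolding N_def .
qed


lemma choose_rho:
  assumes "0 \<le> (\<rho>::real)" "k \<le> N"
  shows "real (N choose k) * \<rho> ^ k \<le> (1 + \<rho>) ^ N"
proof -
  have "(\<rho> + 1) ^ N = (\<Sum>i\<le>N. real (N choose i) * \<rho> ^ i * 1 ^ (N - i))" by (rule binomial_ring)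
  also have "\<dots> \<ge> real (N choose k) * \<rho> ^ k * 1 ^ (N - k)"
    by (rule member_le_sum) (use assms in auto)
  finally show ?thesis by (simp add: add.commute)
qed

lemma term2:
  fixes l \<delta> :: real and m n w K0 :: nat
  assumes l: "100 \<le> l" and m: "real m = exp l" and n: "n \<le> m"
  and w: "real w \<le> 10000 * l + 1" and K0: "real K0 \<le> 24 * l / 14"
  and d: "0 \<le> \<delta>" and dK: "\<delta> ^ (K0 + 1) \<le> exp (- 24 * l)"
  shows "real (m^2) * (real n * (real ((3*w + K0 + 1) choose (K0 + 1)) * \<delta> ^ (K0 + 1))) \<le> exp (- l)"
proof -
  define N where "N = 3*w + K0 + 1"
  define k where "k = K0 + 1"
  define \<rho> where "\<rho> = exp (- 10::real)"
  have \<rho>0: "0 < \<rho>" by (simp add: \<rho>_def)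
  have \<rho>1: "\<rho> \<le> 1 / 13000" unfolding \<rho>_def using exp10 by (simp add: exp_minus field_simps)
  have kN: "k \<le> N" by (simp add: k_def N_def)
  have c: "real (N choose k) \<le> (1 + \<rho>) ^ N / \<rho> ^ k"
    using choose_rho[OF _ kN, of \<rho>] \<rho>0 by (simp add: field_simps)
  have c2: "(1 + \<rho>) ^ N \<le> exp (real N * \<rho>)" by (rule one_plus_pow_le) (use \<rho>0 in simp)
  have rk: "1 / \<rho> ^ k = exp (10 * real k)"
    by (simp add: \<rho>_def exp_pow exp_minus field_simps)
  have "real (N choose k) * \<delta> ^ k \<le> ((1 + \<rho>) ^ N / \<rho> ^ k) * exp (- 24 * l)"
    using c dK d by (intro mult_mono) (auto simp: k_def)
  also have "\<dots> \<le> (exp (real N * \<rho>) / \<rho> ^ k) * exp (- 24 * l)"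
    using c2 \<rho>0 by (intro mult_right_mono divide_right_mono) auto
  also have "\<dots> = exp (real N * \<rho> + 10 * real k - 24 * l)"
  proof -
    have "exp (real N * \<rho>) / \<rho> ^ k * exp (- 24 * l) = exp (real N * \<rho>) * (1 / \<rho> ^ k) * exp (- 24 * l)" by simp
    also have "\<dots> = exp (real N * \<rho>) * exp (10 * real k) * exp (- 24 * l)" unfolding rk ..
    also have "\<dots> = exp (real N * \<rho> + 10 * real k + (- 24 * l))" by (simp only: exp_add)
    finally show ?thesis by simp
  qed
  also have "\<dots> \<le> exp (- 4 * l)"
  proof -
    have NN: "real N \<le> 30002 * l" using w K0 l by (simp add: N_def)
    have "real N * \<rho> \<le> 30002 * l / 13000"
    proof -
      have "real N * \<rho> \<le> (30002 * l) * (1 / 13000)"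
        using NN \<rho>1 \<rho>0 l by (intro mult_mono) auto
      then show ?thesis by simp
    qed
    moreover have "10 * real k \<le> 10 * (24 * l / 14) + 10" using K0 by (simp add: k_def)
    ultimately have "real N * \<rho> + 10 * real k - 24 * l \<le> 30002 * l / 13000 + 10 * (24 * l / 14) + 10 - 24 * l"
      by linarith
    also have "\<dots> \<le> - 4 * l" using l by simp
    finally show ?thesis by simp
  qed
  finally have t: "real (N choose k) * \<delta> ^ k \<le> exp (- 4 * l)" .
  have mn: "real (m^2) * real n \<le> exp (3 * l)"
  proof -
    have "real (m^2) * real n \<le> real m ^ 2 * real m" using n by (simp add: mult_left_mono)
    also have "\<dots> = exp (3 * l)" using m by (simp add: exp_pow[symmetric] power_Suc[symmetric] power2_eq_square exp_add[symmetric])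
    finally show ?thesis .
  qed
  have "real (m^2) * (real n * (real (N choose k) * \<delta> ^ k)) = (real (m^2) * real n) * (real (N choose k) * \<delta> ^ k)"
    by (simp add: mult.assoc)
  also have "\<dots> \<le> exp (3 * l) * exp (- 4 * l)"
    using mn t d by (intro mult_mono) auto
  also have "\<dots> = exp (- l)" by (simp add: exp_add[symmetric])
  finally show ?thesis unfolding N_def k_def .
qed

lemma one_minus_exp: "0 \<le> (\<delta>::real) \<Longrightarrow> \<delta> \<le> 1/2 \<Longrightarrow> exp (- 2 * \<delta>) \<le> 1 - \<delta>"
proof -
  assume d: "0 \<le> \<delta>" "\<delta> \<le> 1/2"
  have "1 + 2 * \<delta> \<le> exp (2 * \<delta>)" by (rule exp_ge_add_one_self)
  then have "exp (- 2 * \<delta>) \<le> 1 / (1 + 2 * \<delta>)" using d by (simp add: exp_minus field_simps)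
  also have "\<dots> \<le> 1 - \<delta>" using d mult_left_mono[of "\<delta>*2" 1 \<delta>] by (simp add: field_simps)
  finally show ?thesis .
qed

lemma G0_low:
  fixes l \<delta> :: real and w K0 :: nat
  assumes l: "100 \<le> l" and w: "10000 * l \<le> real w" "real w \<le> 10000 * l + 1"
  and K0: "real K0 \<le> 24 * l / 14" and d: "0 \<le> \<delta>" "\<delta> < 1 / 10^7" and dK: "exp (- 24 * l) \<le> \<delta> ^ K0"
  shows "exp (- 24 * l) * exp (- l / 100) / 2
     \<le> \<delta>^K0 * (1-\<delta>)^(3*w+K0) * (1 - 2 * exp (- (1/18) * (5 * real w / 12) + (exp (1/18) - 1) * (3/8 * real (w + K0))))"
proof -
  have e1: "exp (1/18::real) - 1 \<le> 1/18 + 1/324"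
    using exp_bound[of "1/18::real"] by (simp add: power2_eq_square)
  have "- (1/18) * (5 * real w / 12) + (exp (1/18) - 1) * (3/8 * real (w + K0))
      \<le> - (1/18) * (5 * real w / 12) + (1/18 + 1/324) * (3/8 * real (w + K0))"
    using e1 by (intro add_left_mono mult_right_mono) auto
  also have "\<dots> = (- 3 * real w + 57 * real K0) / 2592" by (simp add: field_simps)
  also have "\<dots> \<le> -2" using w K0 l by (simp add: field_simps)
  finally have ex: "- (1/18) * (5 * real w / 12) + (exp (1/18) - 1) * (3/8 * real (w + K0)) \<le> -2" .
  have "exp (- (1/18) * (5 * real w / 12) + (exp (1/18) - 1) * (3/8 * real (w + K0))) \<le> exp (-2)"
    using ex by simp
  also have "exp (-2::real) \<le> 1/4"
  proof -
    have "(2::real) \<le> exp 1" using exp_ge_add_one_self[of "1::real"] by simp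
    then have "2^2 \<le> exp (1::real) ^ 2" by (rule power_mono) simp
    then have "4 \<le> exp (2::real)" by (simp add: exp_pow)
    then show ?thesis by (simp add: exp_minus field_simps)
  qed
  finally have eps: "1/2 \<le> 1 - 2 * exp (- (1/18) * (5 * real w / 12) + (exp (1/18) - 1) * (3/8 * real (w + K0)))" by simp
  have "exp (- 2 * \<delta>) ^ (3*w+K0) \<le> (1-\<delta>)^(3*w+K0)"
    by (rule power_mono) (use one_minus_exp[of \<delta>] d in auto)
  moreover have "exp (- l / 100) \<le> exp (- 2 * \<delta>) ^ (3*w+K0)"
  proof -
    have "real (3*w+K0) \<le> 30002 * l" using w K0 l by simp
    then have "2 * \<delta> * real (3*w+K0) \<le> 2 * (1/10^7) * (30002 * l)"
      using d l by (intro mult_mono) auto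
    also have "\<dots> \<le> l / 100" using l by simp
    finally have f: "2 * \<delta> * real (3*w+K0) \<le> l / 100" .
    have "real (3*w+K0) * (- 2 * \<delta>) = - (2 * \<delta> * real (3*w+K0))" by (simp add: algebra_simps)
    then have "- l / 100 \<le> real (3*w+K0) * (- 2 * \<delta>)" using f by linarith
    then have "exp (- l / 100) \<le> exp (real (3*w+K0) * (- 2 * \<delta>))" by simp
    then show ?thesis unfolding exp_pow .
  qed
  ultimately have p: "exp (- l / 100) \<le> (1-\<delta>)^(3*w+K0)" by simp
  have "exp (- 24 * l) * exp (- l / 100) * (1/2)
      \<le> \<delta>^K0 * (1-\<delta>)^(3*w+K0) * (1 - 2 * exp (- (1/18) * (5 * real w / 12) + (exp (1/18) - 1) * (3/8 * real (w + K0))))"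
    using dK p eps d by (intro mult_mono) auto
  then show ?thesis by simp
qed

lemma term1:
  fixes l G0 :: real and m :: nat
  assumes l: "100 \<le> l" and m: "real m = exp l"
  and G: "exp (- 24 * l) * exp (- l / 100) / 2 \<le> G0" "G0 \<le> 1"
  shows "real (m^2) * (1 - G0)^(m^25) \<le> exp (- l)"
proof -
  have M: "real (m^25) = exp (25 * l)"
  proof -
    have "real (m^25) = exp l ^ 25" using m by simp
    also have "\<dots> = exp (real 25 * l)" by (rule exp_pow)
    finally show ?thesis by simp
  qed
  have "(1 - G0)^(m^25) \<le> exp (- G0) ^ (m^25)"
    by (rule power_mono) (use G exp_ge_add_one_self[of "- G0"] in auto)
  also have "\<dots> = exp (- G0 * exp (25 * l))"
  proof -
    have "exp (- G0) ^ (m^25) = exp (real (m^25) * (- G0))" by (rule exp_pow)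
    also have "\<dots> = exp (- G0 * exp (25 * l))" unfolding M by (simp add: mult.commute)
    finally show ?thesis .
  qed
  also have "\<dots> \<le> exp (- (exp (- 24 * l) * exp (- l / 100) / 2) * exp (25 * l))"
    using G by simp
  also have "- (exp (- 24 * l) * exp (- l / 100) / 2) * exp (25 * l) = - exp (99 * l / 100) / 2"
    by (simp add: exp_add[symmetric] field_simps)
  finally have a: "(1 - G0)^(m^25) \<le> exp (- exp (99 * l / 100) / 2)" .
  have big: "6 * l \<le> exp (99 * l / 100)"
  proof -
    have "1 + 99 * l / 200 \<le> exp (99 * l / 200)" by (rule exp_ge_add_one_self)
    then have "(1 + 99 * l / 200)^2 \<le> exp (99 * l / 200) ^ 2" by (rule power_mono) (use l in simp)
    also have "\<dots> = exp (99 * l / 100)" by (simp add: exp_pow)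
    finally have "(1 + 99 * l / 200)^2 \<le> exp (99 * l / 100)" .
    moreover have "6 * l \<le> (1 + 99 * l / 200)^2"
    proof -
      have ll: "100 * l \<le> l * l" using mult_right_mono[of 100 l l] l by simp
      have "(1 + 99 * l / 200)^2 = 1 + 99 * l / 100 + 9801 * (l * l) / 40000" by (simp add: power2_eq_square field_simps)
      then show ?thesis using ll l by linarith
    qed
    ultimately show ?thesis by linarith
  qed
  have m2: "real (m^2) = exp (2 * l)" using m by (simp add: exp_pow)
  have "real (m^2) * (1 - G0)^(m^25) \<le> exp (2 * l) * exp (- exp (99 * l / 100) / 2)"
    unfolding m2 using a by (intro mult_left_mono) auto
  also have "\<dots> = exp (2 * l - exp (99 * l / 100) / 2)" by (simp add: exp_add[symmetric])
  also have "\<dots> \<le> exp (- l)" using big by simp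
  finally show ?thesis .
qed


theorem lemma11:
  shows "\<exists>C::real. \<forall>(n::nat) (m::nat) (\<delta>::real).
           n < m \<and> 0 \<le> \<delta> \<and> \<delta> < 1 / 10 ^ 7 \<longrightarrow>
           (\<integral>p. measure_pmf.prob (algo_experiment \<delta> n m p)
                 {(XI, Y). all_chunks_deletion_free (win_len m) XI Y} \<partial>S_measure n)
             \<ge> 1 - C * real m powr (-1/5)"
proof (intro exI[of _ "exp 20"] allI impI)
  fix n m :: nat and \<delta> :: real
  assume H: "n < m \<and> 0 \<le> \<delta> \<and> \<delta> < 1 / 10 ^ 7"
  then have nm: "n < m" and d0: "0 \<le> \<delta>" and d1: "\<delta> < 1 / 10 ^ 7" by auto
  define F where "F = (\<integral>p. measure_pmf.prob (algo_experiment \<delta> n m p)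
                 {(XI, Y). all_chunks_deletion_free (win_len m) XI Y} \<partial>S_measure n)"
  define l where "l = ln (real m)"
  have m0: "0 < real m" using nm by simp
  have ml: "real m = exp l" using m0 by (simp add: l_def)
  have l0: "0 \<le> l" using nm by (simp add: l_def)
  have mp: "real m powr (-1/5) = exp (- l / 5)" using m0 by (simp add: powr_def l_def)
  have F0: "0 \<le> F" unfolding F_def by (rule integral_nonneg_AE) auto
  show "1 - exp 20 * real m powr (-1/5) \<le> F"
  proof (cases "l < 100")
    case True
    have "exp 20 * real m powr (-1/5) = exp (20 - l / 5)" unfolding mp by (simp add: exp_add[symmetric])
    also have "\<dots> \<ge> 1" using True by simp
    finally show ?thesis using F0 by simp
  next
    case False
    then have l: "100 \<le> l" by simp
    define w where "w = win_len m"
    have wr: "real w = of_int \<lceil>10000 * l\<rceil>" using l by (simp add: w_def win_len_def l_def)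
    have w1: "10000 * l \<le> real w" "real w \<le> 10000 * l + 1" using wr by linarith+
    have wpos: "0 < w" using w1 l by simp
    define K0 where "K0 = (if \<delta> = 0 then 0 else nat \<lfloor>24 * l / (- ln \<delta>)\<rfloor>)"
    have K: "real K0 \<le> 24 * l / 14" "exp (- 24 * l) \<le> \<delta> ^ K0" "\<delta> ^ (K0 + 1) \<le> exp (- 24 * l)"
    proof -
      have "real K0 \<le> 24 * l / 14 \<and> exp (- 24 * l) \<le> \<delta> ^ K0 \<and> \<delta> ^ (K0 + 1) \<le> exp (- 24 * l)"
      proof (cases "\<delta> = 0")
        case True
        then show ?thesis using l by (simp add: K0_def)
      next
        case False
        then have dp: "0 < \<delta>" using d0 by simp
        show ?thesis using K0_facts[OF dp d1 l0] False by (simp add: K0_def)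
      qed
      then show "real K0 \<le> 24 * l / 14" "exp (- 24 * l) \<le> \<delta> ^ K0" "\<delta> ^ (K0 + 1) \<le> exp (- 24 * l)" by auto
    qed
    define G0 where "G0 = \<delta>^K0 * (1-\<delta>)^(3*w+K0) * (1 - 2 * exp (- (1/18) * (5 * real w / 12) + (exp (1/18) - 1) * (3/8 * real (w + K0))))"
    have d01: "0 \<le> \<delta>" "\<delta> \<le> 1" using d0 d1 by auto
    have G0low: "exp (- 24 * l) * exp (- l / 100) / 2 \<le> G0"
      unfolding G0_def by (rule G0_low[OF l w1 K(1) d0 d1 K(2)])
    have G01: "G0 \<le> 1"
    proof -
      define a where "a = \<delta>^K0 * (1-\<delta>)^(3*w+K0)"
      define b where "b = 1 - 2 * exp (- (1/18) * (5 * real w / 12) + (exp (1/18) - 1) * (3/8 * real (w + K0)))"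
      have a01: "0 \<le> a" "a \<le> 1" unfolding a_def using d01 by (auto intro!: mult_le_one power_le_one)
      have b1: "b \<le> 1" unfolding b_def by simp
      have "a * b \<le> 1"
      proof (cases "0 \<le> b")
        case True then show ?thesis using a01 b1 mult_le_one by blast
      next
        case False then have "a * b \<le> 0" using a01 by (simp add: mult_nonneg_nonpos)
        then show ?thesis by simp
      qed
      then show ?thesis unfolding G0_def a_def b_def .
    qed
    have I: "1 - real (m^2) * ((1 - G0)^(m^25) + real n * (real ((3*w + K0 + 1) choose (K0 + 1)) * \<delta> ^ (K0 + 1))
         + real n * (exp (- (1/8) * (3/8 * real (w + K0))) * (1 + (2 * (1/8) + (1/8)^2) / 6) ^ (w + K0)))
       \<le> F"
      unfolding F_def
      by (rule integrated[OF d01 w_def wpos _ _ _ G0_def G01]) auto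
    have t1: "real (m^2) * (1 - G0)^(m^25) \<le> exp (- l)" by (rule term1[OF l ml G0low G01])
    have t2: "real (m^2) * (real n * (real ((3*w + K0 + 1) choose (K0 + 1)) * \<delta> ^ (K0 + 1))) \<le> exp (- l)"
      by (rule term2[OF l ml _ w1(2) K(1) d0 K(3)]) (use nm in simp)
    have t3: "real (m^2) * (real n * (exp (- (1/8) * (3/8 * real (w + K0))) * (1 + (2 * (1/8) + (1/8)^2) / 6) ^ (w + K0))) \<le> exp (- l)"
      by (rule term3[OF l ml _ w1(1)]) (use nm in simp)
    have sum3: "real (m^2) * ((1 - G0)^(m^25) + real n * (real ((3*w + K0 + 1) choose (K0 + 1)) * \<delta> ^ (K0 + 1))
         + real n * (exp (- (1/8) * (3/8 * real (w + K0))) * (1 + (2 * (1/8) + (1/8)^2) / 6) ^ (w + K0)))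
       \<le> 3 * exp (- l)"
      using t1 t2 t3 by (simp add: distrib_left)
    have "3 * exp (- l) \<le> exp (- l / 5)"
    proof -
      have "1 + 4 * l / 5 \<le> exp (4 * l / 5)" by (rule exp_ge_add_one_self)
      then have "3 \<le> exp (4 * l / 5)" using l by linarith
      then have "3 * exp (- l) \<le> exp (4 * l / 5) * exp (- l)" by simp
      also have "\<dots> = exp (- l / 5)" by (simp add: exp_add[symmetric])
      finally show ?thesis .
    qed
    also have "\<dots> \<le> exp 20 * real m powr (-1/5)" unfolding mp
      using mult_right_mono[of 1 "exp 20" "exp (- l / 5)"] by simp
    finally show ?thesis using I sum3 by linarith
  qed
qed


end
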